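(* Let $0<\varepsilon<1$, let $n\ge1$ and $k\ge1$ be integers, and let $A=(a_{pq})$ be a real $n\times n$ matrix with $a_{11}>0$. Suppose $\lambda>0$ is a simple eigenvalue of $A$ with $A\mathbf u=\lambda\mathbf u$ and $\mathbf v^TA=\lambda\mathbf v^T$ for some entrywise positive $\mathbf u,\mathbf v\in\mathbb R^n$. In each part below $B=(b_{pq})$ is a real matrix of order $k+n-1$, and in all parts $w_i=u_1$ for $1\le i\le k-1$ and $w_i=u_{i-k+1}$ for $k\le i\le k+n-1$. Then: 1. For every $j\in\{1,\dots,k\}$, let $$b_{pq}=\begin{cases} \lambda,&\text{if }(p,q)\in\{(1,2),\dots,(k-1,k)\};\\ a_{11},&\text{if }(p,q)=(k,1);\\ a_{p-k+1,1},&\text{if }p\in\{k+1,\dots,k+n-1\},\ q=j;\\ a_{p-k+1,q-k+1},&\text{if }p\in\{k,\dots,k+n-1\},\ q\in\{k+1,\dots,k+n-1\};\\ 0,&\text{otherwise}. \end{cases}$$ Then $\lambda$ is a simple eigenvalue of $B$, $B\mathbf w=\lambda\mathbf w$ and $\mathbf z^TB=\lambda\mathbf z^T$ where $z_i=\frac{a_{11}v_1}{\lambda}$ for $1\le i\le j-1$, $z_i=v_1$ for $j\le i\le k-1$, $z_i=v_{i-k+1}$ for $k\le i\le k+n-1$; consequently $B$ is algebraically positive. 2. For every $j\in\{1,\dots,k-1\}$ and $s\in\{1,\dots,k\}\setminus\{j+1\}$, let $$b_{pq}=\begin{cases} \varepsilon\lambda,&\text{if }(p,q)=(j,j+1);\\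 \lambda,&\text{if }(p,q)\in\{(1,2),\dots,(k-1,k)\}\setminus\{(j,j+1)\};\\ a_{11},&\text{if }(p,q)=(k,1);\\ (1-\varepsilon)\lambda,&\text{if }(p,q)=(j,s);\\ a_{p-k+1,1},&\text{if }p\in\{k+1,\dots,k+n-1\},\ q=s;\\ a_{p-k+1,q-k+1},&\text{if }p\in\{k,\dots,k+n-1\},\ q\in\{k+1,\dots,k+n-1\};\\ 0,&\text{otherwise}. \end{cases}$$ Then $\lambda$ is a simple eigenvalue of $B$ with $B\mathbf w=\lambda\mathbf w$ and $\mathbf z^TB=\lambda\mathbf z^T$, and $B$ is algebraically positive, where: if $s\le j$, $z_i=\frac{a_{11}v_1}{\lambda}$ for $1\le i\le s-1$, $z_i=\frac{v_1}{\varepsilon}$ for $s\le i\le j$, $z_i=v_1$ for $j+1\le i\le k-1$, $z_i=v_{i-k+1}$ for $k\le i\le k+n-1$; if $s\ge j+2$, $z_i=\frac{a_{11}v_1}{\lambda}$ for $1\le i\le j$, $z_i=\frac{\varepsilon a_{11}v_1}{\lambda}$ for $j+1\le i\le s-1$, $z_i=v_1$ for $s\le i\le k-1$, $z_i=v_{i-k+1}$ for $k\le i\le k+n-1$. Further, $b_{js}z_j+\sum_{i=1}^{n-1}b_{k+i,s}z_{k+i}$ equals $\left(\frac{\lambda}{\varepsilon}-a_{11}\right)v_1$ if $s\le j$ and equals $(\lambda-\varepsilon a_{11})v_1$ if $s\ge j+2$, and this quantity is positive for a suitable choice of $\varepsilon\in(0,1)$. 3. For every $s\in\{2,\dots,k\}$,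 let $$b_{pq}=\begin{cases} \lambda,&\text{if }(p,q)\in\{(1,2),\dots,(k-1,k)\};\\ \varepsilon a_{11},&\text{if }(p,q)=(k,1);\\ (1-\varepsilon)a_{11},&\text{if }(p,q)=(k,s);\\ a_{p-k+1,1},&\text{if }p\in\{k+1,\dots,k+n-1\},\ q=s;\\ a_{p-k+1,q-k+1},&\text{if }p\in\{k,\dots,k+n-1\},\ q\in\{k+1,\dots,k+n-1\};\\ 0,&\text{otherwise}. \end{cases}$$ Then $\lambda$ is a simple eigenvalue of $B$, $B\mathbf w=\lambda\mathbf w$ and $\mathbf z^TB=\lambda\mathbf z^T$ where $z_i=\frac{\varepsilon a_{11}v_1}{\lambda}$ for $1\le i\le s-1$, $z_i=v_1$ for $s\le i\le k-1$, $z_i=v_{i-k+1}$ for $k\le i\le k+n-1$; consequently $B$ is algebraically positive. Further, $b_{ks}z_k+\sum_{i=1}^{n-1}b_{k+i,s}z_{k+i}=(\lambda-\varepsilon a_{11})v_1$, and this is positive for a suitable choice of $\varepsilon\in(0,1)$.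
   Context: A real square matrix $M$ is algebraically positive if there is a real polynomial $f$ such that every entry of $f(M)$ is positive. A simple eigenvalue is one of algebraic multiplicity one. Index ranges of the form $a\le i\le b$ with $a>b$ are empty. *)

theory Defs
  imports "Jordan_Normal_Form.Char_Poly" "HOL-Computational_Algebra.Polynomial"
begin

(* Conventions: matrices are Jordan_Normal_Form "real mat" (0-indexed).
   The paper's 1-indexed entry a_pq of A is  A $$ (p-1, q-1);  u_i is u $ (i-1).
   Matrices B are given by 1-indexed entry functions b p q and turned into
   JNF matrices by mat_of_1 (entry (i,j) of the JNF matrix = b (i+1) (j+1)). *)

definition mat_of_1 :: "nat \<Rightarrow> (nat \<Rightarrow> nat \<Rightarrow> real) \<Rightarrow> real mat" where
  "mat_of_1 N b = mat N N (\<lambda>(i, j). b (i + 1) (j + 1))"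

definition vec_of_1 :: "nat \<Rightarrow> (nat \<Rightarrow> real) \<Rightarrow> real vec" where
  "vec_of_1 N z = vec N (\<lambda>i. z (i + 1))"

definition simple_eigenvalue :: "real mat \<Rightarrow> real \<Rightarrow> bool" where
  "simple_eigenvalue M l \<longleftrightarrow> order l (char_poly M) = 1"

definition algebraically_positive :: "real mat \<Rightarrow> bool" where
  "algebraically_positive M \<longleftrightarrow> (\<exists>f :: real poly. \<forall>i < dim_row M. \<forall>j < dim_col M.
      (\<Sum>d\<le>degree f. coeff f d * (M ^\<^sub>m d) $$ (i, j)) > 0)"

definition wvec :: "real vec \<Rightarrow> nat \<Rightarrow> nat \<Rightarrow> real" where
  "wvec u k i = (if i \<le> k - 1 then u $ 0 else u $ (i - k))"

definition B1 :: "real mat \<Rightarrow> real \<Rightarrow> nat \<Rightarrow> nat \<Rightarrow> nat \<Rightarrow> nat \<Rightarrow> nat \<Rightarrow> real" where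
  "B1 A l k n j p q =
    (if 1 \<le> p \<and> p \<le> k - 1 \<and> q = p + 1 then l
     else if p = k \<and> q = 1 then A $$ (0, 0)
     else if k + 1 \<le> p \<and> p \<le> k + n - 1 \<and> q = j then A $$ (p - k, 0)
     else if k \<le> p \<and> p \<le> k + n - 1 \<and> k + 1 \<le> q \<and> q \<le> k + n - 1 then A $$ (p - k, q - k)
     else 0)"

definition z1 :: "real mat \<Rightarrow> real \<Rightarrow> real vec \<Rightarrow> nat \<Rightarrow> nat \<Rightarrow> nat \<Rightarrow> real" where
  "z1 A l v k j i =
    (if i \<le> j - 1 then A $$ (0, 0) * v $ 0 / l
     else if i \<le> k - 1 then v $ 0
     else v $ (i - k))"

definition B2 :: "real mat \<Rightarrow> real \<Rightarrow> real \<Rightarrow> nat \<Rightarrow> nat \<Rightarrow> nat \<Rightarrow> nat \<Rightarrow> nat \<Rightarrow> nat \<Rightarrow> real" where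
  "B2 A l e k n j s p q =
    (if p = j \<and> q = j + 1 then e * l
     else if 1 \<le> p \<and> p \<le> k - 1 \<and> q = p + 1 then l
     else if p = k \<and> q = 1 then A $$ (0, 0)
     else if p = j \<and> q = s then (1 - e) * l
     else if k + 1 \<le> p \<and> p \<le> k + n - 1 \<and> q = s then A $$ (p - k, 0)
     else if k \<le> p \<and> p \<le> k + n - 1 \<and> k + 1 \<le> q \<and> q \<le> k + n - 1 then A $$ (p - k, q - k)
     else 0)"

definition z2 :: "real mat \<Rightarrow> real \<Rightarrow> real \<Rightarrow> real vec \<Rightarrow> nat \<Rightarrow> nat \<Rightarrow> nat \<Rightarrow> nat \<Rightarrow> real" where
  "z2 A l e v k j s i =
    (if s \<le> j then
       (if i \<le> s - 1 then A $$ (0, 0) * v $ 0 / l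
        else if i \<le> j then v $ 0 / e
        else if i \<le> k - 1 then v $ 0
        else v $ (i - k))
     else
       (if i \<le> j then A $$ (0, 0) * v $ 0 / l
        else if i \<le> s - 1 then e * A $$ (0, 0) * v $ 0 / l
        else if i \<le> k - 1 then v $ 0
        else v $ (i - k)))"

definition B3 :: "real mat \<Rightarrow> real \<Rightarrow> real \<Rightarrow> nat \<Rightarrow> nat \<Rightarrow> nat \<Rightarrow> nat \<Rightarrow> nat \<Rightarrow> real" where
  "B3 A l e k n s p q =
    (if 1 \<le> p \<and> p \<le> k - 1 \<and> q = p + 1 then l
     else if p = k \<and> q = 1 then e * A $$ (0, 0)
     else if p = k \<and> q = s then (1 - e) * A $$ (0, 0)
     else if k + 1 \<le> p \<and> p \<le> k + n - 1 \<and> q = s then A $$ (p - k, 0)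
     else if k \<le> p \<and> p \<le> k + n - 1 \<and> k + 1 \<le> q \<and> q \<le> k + n - 1 then A $$ (p - k, q - k)
     else 0)"

definition z3 :: "real mat \<Rightarrow> real \<Rightarrow> real \<Rightarrow> real vec \<Rightarrow> nat \<Rightarrow> nat \<Rightarrow> nat \<Rightarrow> real" where
  "z3 A l e v k s i =
    (if i \<le> s - 1 then e * A $$ (0, 0) * v $ 0 / l
     else if i \<le> k - 1 then v $ 0
     else v $ (i - k))"

end

theory Submission
  imports Defs
begin


definition extv :: "nat \<Rightarrow> real vec \<Rightarrow> real vec" where
  "extv N y = vec N (\<lambda>i. if i = 0 then 0 else y $ (i - 1))"

lemma ifz:
  "(if P then 1 else 0) * (x::real) = (if P then x else 0)"
  "x * (if P then 1 else 0) = (if P then x else 0)"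
  "(if P then x else 0) * y = (if P then x * y else 0)"
  "y * (if P then x else 0) = (if P then y * x else 0)"
  "(if P then x else 0) / y = (if P then x / y else 0)"
  "- (if P then x else 0) = (if P then - x else 0)"
  by auto

lemma sum_Suc_split: "(\<Sum>l\<in>{0..<Suc m}. f l) = f 0 + (\<Sum>j<m. f (Suc j))"
  by (subst atLeast0LessThan, rule sum.lessThan_Suc_shift)

lemma setup_decomp:
  fixes M :: "real mat" and w :: "real vec"
  assumes M: "M \<in> carrier_mat (Suc m) (Suc m)" and w: "w \<in> carrier_vec (Suc m)"
    and w0: "w $ 0 \<noteq> 0" and Mw: "M *\<^sub>v w = l \<cdot>\<^sub>v w"
  shows "\<exists>M1 r. M1 \<in> carrier_mat m m \<and> r \<in> carrier_vec m \<and> char_poly M = [:-l,1:] * char_poly M1 \<and>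
     (\<forall>y \<in> carrier_vec m. M *\<^sub>v extv (Suc m) y = (r \<bullet> y) \<cdot>\<^sub>v w + extv (Suc m) (M1 *\<^sub>v y))"
proof -
  define P where "P = mat (Suc m) (Suc m) (\<lambda>(i,j). if j = 0 then w $ i else if i = j then 1 else (0::real))"
  define Q where "Q = mat (Suc m) (Suc m) (\<lambda>(i,j). if j = 0 then (if i = 0 then 1 / w $ 0 else - w $ i / w $ 0)
      else if i = j then 1 else (0::real))"
  have P: "P \<in> carrier_mat (Suc m) (Suc m)" and Q: "Q \<in> carrier_mat (Suc m) (Suc m)" unfolding P_def Q_def by auto
  have wN: "dim_vec w = Suc m" using w by auto
  have PQ: "P * Q = 1\<^sub>m (Suc m)"
  proof (rule eq_matI)
    fix i j assume i: "i < dim_row (1\<^sub>m (Suc m))" and j: "j < dim_col (1\<^sub>m (Suc m))"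
    hence i: "i < Suc m" and j: "j < Suc m" by auto
    have "(P * Q) $$ (i, j) = (\<Sum>l\<in>{0..<Suc m}. P $$ (i,l) * Q $$ (l,j))"
      using i j P Q by (simp add: scalar_prod_def)
    also have "\<dots> = 1\<^sub>m (Suc m) $$ (i, j)"
      unfolding sum_Suc_split using i j w0
      by (cases i; cases j; auto simp: P_def Q_def ifz field_simps)
    finally show "(P * Q) $$ (i, j) = 1\<^sub>m (Suc m) $$ (i, j)" .
  qed (auto simp: P_def Q_def)
  have QP: "Q * P = 1\<^sub>m (Suc m)"
  proof (rule eq_matI)
    fix i j assume i: "i < dim_row (1\<^sub>m (Suc m))" and j: "j < dim_col (1\<^sub>m (Suc m))"
    hence i: "i < Suc m" and j: "j < Suc m" by auto
    have "(Q * P) $$ (i, j) = (\<Sum>l\<in>{0..<Suc m}. Q $$ (i,l) * P $$ (l,j))"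
      using i j P Q by (simp add: scalar_prod_def)
    also have "\<dots> = 1\<^sub>m (Suc m) $$ (i, j)"
      unfolding sum_Suc_split using i j w0
      by (cases i; cases j; auto simp: P_def Q_def ifz field_simps)
    finally show "(Q * P) $$ (i, j) = 1\<^sub>m (Suc m) $$ (i, j)" .
  qed (auto simp: P_def Q_def)
  define M' where "M' = Q * M * P"
  have M': "M' \<in> carrier_mat (Suc m) (Suc m)" unfolding M'_def using P Q M by auto
  have MPQ: "M = P * M' * Q"
  proof -
    have "P * M' * Q = (P * Q) * M * (P * Q)" unfolding M'_def using P Q M
      by (simp add: assoc_mult_mat[of _ "Suc m" "Suc m" _ "Suc m" _ "Suc m"])
    thus "M = P * M' * Q" unfolding PQ using M by simp
  qed
  have sim: "similar_mat M M'"
    by (rule similar_matI[OF _ PQ QP MPQ], insert M M' P Q, auto)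
  have Qw: "Q *\<^sub>v w = unit_vec (Suc m) 0"
  proof (rule eq_vecI)
    fix i assume "i < dim_vec (unit_vec (Suc m) 0)"
    hence i: "i < Suc m" by auto
    have "(Q *\<^sub>v w) $ i = (\<Sum>l\<in>{0..<Suc m}. Q $$ (i,l) * w $ l)"
      using i Q wN by (simp add: scalar_prod_def)
    also have "\<dots> = unit_vec (Suc m) 0 $ i"
      unfolding sum_Suc_split using i w0
      by (cases i; auto simp: Q_def ifz field_simps)
    finally show "(Q *\<^sub>v w) $ i = unit_vec (Suc m) 0 $ i" .
  qed (use Q in auto)
  have colP: "col P 0 = w" by (rule eq_vecI, auto simp: P_def wN)
  have col0: "col M' 0 = l \<cdot>\<^sub>v unit_vec (Suc m) 0"
  proof -
    have "col M' 0 = (Q * M) *\<^sub>v col P 0" unfolding M'_def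
      by (rule col_mult2, insert Q M P, auto)
    also have "\<dots> = Q *\<^sub>v (M *\<^sub>v w)" unfolding colP using Q M w by auto
    also have "\<dots> = l \<cdot>\<^sub>v (Q *\<^sub>v w)" unfolding Mw by (rule mult_mat_vec[OF Q w])
    finally show ?thesis unfolding Qw .
  qed
  have M'0: "M' $$ (i, 0) = (if i = 0 then l else 0)" if "i < Suc m" for i
  proof -
    have "M' $$ (i, 0) = col M' 0 $ i" using that M' by auto
    thus ?thesis unfolding col0 using that by auto
  qed
  define M1 where "M1 = mat m m (\<lambda>(i,j). M' $$ (Suc i, Suc j))"
  define r where "r = vec m (\<lambda>j. M' $$ (0, Suc j))"
  have M1: "M1 \<in> carrier_mat m m" unfolding M1_def by auto
  have r: "r \<in> carrier_vec m" unfolding r_def by auto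
  have blk: "M' = four_block_mat (mat 1 1 (\<lambda>_. l)) (mat 1 m (\<lambda>(_,j). M' $$ (0, Suc j))) (0\<^sub>m m 1) M1"
    by (rule eq_matI, insert M' M'0, auto simp: M1_def four_block_mat_def)
  have cp1: "char_poly (mat 1 1 (\<lambda>_. l)) = [:-l, 1:]"
    by (subst char_poly_upper_triangular[of _ 1], auto simp: upper_triangular_def diag_mat_def)
  have cp: "char_poly M = [:-l,1:] * char_poly M1"
  proof -
    have "char_poly M' = char_poly (mat 1 1 (\<lambda>_. l)) * char_poly M1"
      by (subst blk, rule char_poly_four_block_zeros_col, insert M1, auto)
    thus ?thesis unfolding char_poly_similar[OF sim] cp1 .
  qed
  have vecpart: "M *\<^sub>v extv (Suc m) y = (r \<bullet> y) \<cdot>\<^sub>v w + extv (Suc m) (M1 *\<^sub>v y)"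
    if y: "y \<in> carrier_vec m" for y
  proof -
    have dy: "dim_vec y = m" using y by auto
    have e: "extv (Suc m) y \<in> carrier_vec (Suc m)" unfolding extv_def by auto
    have Qe: "Q *\<^sub>v extv (Suc m) y = extv (Suc m) y"
    proof (rule eq_vecI)
      fix i assume "i < dim_vec (extv (Suc m) y)"
      hence i: "i < Suc m" by (auto simp: extv_def)
      have "(Q *\<^sub>v extv (Suc m) y) $ i = (\<Sum>l\<in>{0..<Suc m}. Q $$ (i,l) * extv (Suc m) y $ l)"
        using i Q by (simp add: scalar_prod_def extv_def)
      also have "\<dots> = extv (Suc m) y $ i"
        unfolding sum_Suc_split using i
        by (cases i; auto simp: Q_def extv_def ifz)
      finally show "(Q *\<^sub>v extv (Suc m) y) $ i = extv (Suc m) y $ i" .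
    qed (use Q in \<open>auto simp: extv_def\<close>)
    have M'e: "M' *\<^sub>v extv (Suc m) y = (r \<bullet> y) \<cdot>\<^sub>v unit_vec (Suc m) 0 + extv (Suc m) (M1 *\<^sub>v y)"
    proof (rule eq_vecI)
      fix i assume "i < dim_vec ((r \<bullet> y) \<cdot>\<^sub>v unit_vec (Suc m) 0 + extv (Suc m) (M1 *\<^sub>v y))"
      hence i: "i < Suc m" by (auto simp: extv_def)
      have "(M' *\<^sub>v extv (Suc m) y) $ i = (\<Sum>l\<in>{0..<Suc m}. M' $$ (i,l) * extv (Suc m) y $ l)"
        using i M' by (simp add: scalar_prod_def extv_def)
      also have "\<dots> = ((r \<bullet> y) \<cdot>\<^sub>v unit_vec (Suc m) 0 + extv (Suc m) (M1 *\<^sub>v y)) $ i"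
        unfolding sum_Suc_split using i dy M1
        by (cases i; auto simp: extv_def r_def M1_def scalar_prod_def atLeast0LessThan)
      finally show "(M' *\<^sub>v extv (Suc m) y) $ i = ((r \<bullet> y) \<cdot>\<^sub>v unit_vec (Suc m) 0 + extv (Suc m) (M1 *\<^sub>v y)) $ i" .
    qed (use M' in \<open>auto simp: extv_def\<close>)
    have Pu: "P *\<^sub>v ((c::real) \<cdot>\<^sub>v unit_vec (Suc m) 0 + extv (Suc m) x) = c \<cdot>\<^sub>v w + extv (Suc m) x" for c x
    proof (rule eq_vecI)
      fix i assume "i < dim_vec (c \<cdot>\<^sub>v w + extv (Suc m) x)"
      hence i: "i < Suc m" using wN by (auto simp: extv_def)
      have "(P *\<^sub>v (c \<cdot>\<^sub>v unit_vec (Suc m) 0 + extv (Suc m) x)) $ i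
         = (\<Sum>l\<in>{0..<Suc m}. P $$ (i,l) * (c \<cdot>\<^sub>v unit_vec (Suc m) 0 + extv (Suc m) x) $ l)"
        using i P by (simp add: scalar_prod_def extv_def)
      also have "\<dots> = (c \<cdot>\<^sub>v w + extv (Suc m) x) $ i"
        unfolding sum_Suc_split using i wN
        by (cases i; auto simp: P_def extv_def ifz)
      finally show "(P *\<^sub>v (c \<cdot>\<^sub>v unit_vec (Suc m) 0 + extv (Suc m) x)) $ i = (c \<cdot>\<^sub>v w + extv (Suc m) x) $ i" .
    qed (use P wN in \<open>auto simp: extv_def\<close>)
    have "M *\<^sub>v extv (Suc m) y = P *\<^sub>v (M' *\<^sub>v (Q *\<^sub>v extv (Suc m) y))"
      unfolding MPQ using P M' Q e
      by (simp add: assoc_mult_mat_vec[of _ "Suc m" "Suc m" _ "Suc m"])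
    also have "\<dots> = (r \<bullet> y) \<cdot>\<^sub>v w + extv (Suc m) (M1 *\<^sub>v y)" unfolding Qe M'e Pu ..
    finally show ?thesis .
  qed
  show ?thesis using M1 r cp vecpart by blast
qed
lemma order_factor:
  fixes M :: "real mat"
  assumes M: "M \<in> carrier_mat (Suc m) (Suc m)" and M1: "M1 \<in> carrier_mat m m"
    and cp: "char_poly M = [:-l,1:] * char_poly M1"
  shows "order l (char_poly M) = 1 + order l (char_poly M1)"
proof -
  have "char_poly M \<noteq> 0" using degree_monic_char_poly[OF M] by auto
  hence "order l (char_poly M) = order l [:-l,1:] + order l (char_poly M1)"
    unfolding cp by (rule order_mult)
  moreover have "order l [:-l,1:] = 1" using order_power_n_n[of l 1] by simp
  ultimately show ?thesis by simp
qed

lemma extv_dim[simp]: "dim_vec (extv N y) = N" unfolding extv_def by simp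

lemma extv_index: "i < N \<Longrightarrow> extv N y $ i = (if i = 0 then 0 else y $ (i - 1))"
  unfolding extv_def by auto

lemma geom_one:
  fixes M :: "real mat" and u x :: "real vec"
  assumes M: "M \<in> carrier_mat (Suc m) (Suc m)" and u: "u \<in> carrier_vec (Suc m)"
    and u0: "u $ 0 \<noteq> 0" and Mu: "M *\<^sub>v u = l \<cdot>\<^sub>v u"
    and ord: "order l (char_poly M) = 1"
    and x: "x \<in> carrier_vec (Suc m)" and Mx: "M *\<^sub>v x = l \<cdot>\<^sub>v x"
  shows "\<exists>c. x = c \<cdot>\<^sub>v u"
proof -
  obtain M1 r where M1: "M1 \<in> carrier_mat m m" and r: "r \<in> carrier_vec m"
    and cp: "char_poly M = [:-l,1:] * char_poly M1"
    and vp: "\<And>y. y \<in> carrier_vec m \<Longrightarrow> M *\<^sub>v extv (Suc m) y = (r \<bullet> y) \<cdot>\<^sub>v u + extv (Suc m) (M1 *\<^sub>v y)"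
    using setup_decomp[OF M u u0 Mu] by blast
  have "order l (char_poly M1) = 0" using order_factor[OF M M1 cp] ord by simp
  moreover have "char_poly M1 \<noteq> 0" using degree_monic_char_poly[OF M1] by auto
  ultimately have np: "poly (char_poly M1) l \<noteq> 0" using order_root[of "char_poly M1" l] by auto
  define c where "c = x $ 0 / u $ 0"
  define x' where "x' = x - c \<cdot>\<^sub>v u"
  have x': "x' \<in> carrier_vec (Suc m)" unfolding x'_def using x u by auto
  have x'0: "x' $ 0 = 0" unfolding x'_def c_def using x u u0 by auto
  have Mx': "M *\<^sub>v x' = l \<cdot>\<^sub>v x'"
    by (rule eq_vecI, insert M x u Mx Mu, auto simp: x'_def mult_minus_distrib_mat_vec mult_mat_vec
        algebra_simps)
  define y where "y = vec m (\<lambda>i. x' $ Suc i)"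
  have y: "y \<in> carrier_vec m" unfolding y_def by auto
  have ey: "extv (Suc m) y = x'"
    by (rule eq_vecI, insert x' x'0, auto simp: extv_def y_def)
  have eq: "(r \<bullet> y) \<cdot>\<^sub>v u + extv (Suc m) (M1 *\<^sub>v y) = l \<cdot>\<^sub>v extv (Suc m) y"
    using vp[OF y] Mx' ey by simp
  have "((r \<bullet> y) \<cdot>\<^sub>v u + extv (Suc m) (M1 *\<^sub>v y)) $ 0 = (l \<cdot>\<^sub>v extv (Suc m) y) $ 0"
    using eq by simp
  hence "(r \<bullet> y) * u $ 0 = 0" using u by (simp add: extv_index)
  hence ry: "r \<bullet> y = 0" using u0 by simp
  have M1y: "M1 *\<^sub>v y = l \<cdot>\<^sub>v y"
  proof (rule eq_vecI)
    fix i assume "i < dim_vec (l \<cdot>\<^sub>v y)"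
    hence i: "i < m" using y by auto
    have "((r \<bullet> y) \<cdot>\<^sub>v u + extv (Suc m) (M1 *\<^sub>v y)) $ Suc i = (l \<cdot>\<^sub>v extv (Suc m) y) $ Suc i"
      using eq by simp
    thus "(M1 *\<^sub>v y) $ i = (l \<cdot>\<^sub>v y) $ i" using i u y M1 ry by (simp add: extv_index)
  qed (use M1 y in auto)
  have "y = 0\<^sub>v m"
  proof (rule ccontr)
    assume "y \<noteq> 0\<^sub>v m"
    hence "eigenvector M1 y l" unfolding eigenvector_def using y M1 M1y by auto
    hence "eigenvalue M1 l" unfolding eigenvalue_def by auto
    thus False using np eigenvalue_root_char_poly[OF M1] by auto
  qed
  hence "x' = 0\<^sub>v (Suc m)" using ey by (auto simp: extv_def)
  hence x0: "\<And>i. i < Suc m \<Longrightarrow> x' $ i = 0" by simp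
  have "x = c \<cdot>\<^sub>v u"
  proof (rule eq_vecI)
    fix i assume "i < dim_vec (c \<cdot>\<^sub>v u)"
    hence i: "i < Suc m" using u by auto
    show "x $ i = (c \<cdot>\<^sub>v u) $ i" using x0[OF i] i x u by (simp add: x'_def)
  qed (use x u in auto)
  thus ?thesis by blast
qed

lemma alg_simple:
  fixes M :: "real mat" and w z :: "real vec"
  assumes M: "M \<in> carrier_mat (Suc m) (Suc m)" and w: "w \<in> carrier_vec (Suc m)"
    and w0: "w $ 0 \<noteq> 0" and Mw: "M *\<^sub>v w = l \<cdot>\<^sub>v w"
    and z: "z \<in> carrier_vec (Suc m)"
    and zM: "\<And>j. j < Suc m \<Longrightarrow> (\<Sum>i<Suc m. z $ i * M $$ (i, j)) = l * z $ j"
    and zw: "z \<bullet> w \<noteq> 0"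
    and geom: "\<And>x. x \<in> carrier_vec (Suc m) \<Longrightarrow> M *\<^sub>v x = l \<cdot>\<^sub>v x \<Longrightarrow> \<exists>c. x = c \<cdot>\<^sub>v w"
  shows "order l (char_poly M) = 1"
proof -
  obtain M1 r where M1: "M1 \<in> carrier_mat m m" and r: "r \<in> carrier_vec m"
    and cp: "char_poly M = [:-l,1:] * char_poly M1"
    and vp: "\<And>y. y \<in> carrier_vec m \<Longrightarrow> M *\<^sub>v extv (Suc m) y = (r \<bullet> y) \<cdot>\<^sub>v w + extv (Suc m) (M1 *\<^sub>v y)"
    using setup_decomp[OF M w w0 Mw] by blast
  have zMx: "z \<bullet> (M *\<^sub>v x) = l * (z \<bullet> x)" if x: "x \<in> carrier_vec (Suc m)" for x
  proof -
    have "z \<bullet> (M *\<^sub>v x) = (\<Sum>i<Suc m. z $ i * (\<Sum>j<Suc m. M $$ (i,j) * x $ j))"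
      using M x by (simp add: scalar_prod_def atLeast0LessThan row_def)
    also have "\<dots> = (\<Sum>j<Suc m. (\<Sum>i<Suc m. z $ i * M $$ (i, j)) * x $ j)"
      unfolding sum_distrib_left sum_distrib_right
      by (subst sum.swap, simp del: sum.lessThan_Suc add: mult.assoc mult.left_commute)
    also have "\<dots> = (\<Sum>j<Suc m. l * z $ j * x $ j)" using zM by simp
    also have "\<dots> = l * (z \<bullet> x)" using x
      by (simp del: sum.lessThan_Suc add: scalar_prod_def atLeast0LessThan sum_distrib_left mult.assoc)
    finally show ?thesis .
  qed
  have "poly (char_poly M1) l \<noteq> 0"
  proof
    assume "poly (char_poly M1) l = 0"
    hence "eigenvalue M1 l" using eigenvalue_root_char_poly[OF M1] by auto
    then obtain y where "eigenvector M1 y l" unfolding eigenvalue_def by auto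
    hence y: "y \<in> carrier_vec m" and y0: "y \<noteq> 0\<^sub>v m" and M1y: "M1 *\<^sub>v y = l \<cdot>\<^sub>v y"
      unfolding eigenvector_def using M1 by auto
    define x where "x = extv (Suc m) y"
    have x: "x \<in> carrier_vec (Suc m)" unfolding x_def extv_def by auto
    have Mx: "M *\<^sub>v x = (r \<bullet> y) \<cdot>\<^sub>v w + l \<cdot>\<^sub>v x"
      unfolding x_def vp[OF y] M1y by (rule eq_vecI, insert y, auto simp: extv_def)
    have "z \<bullet> (M *\<^sub>v x) = (r \<bullet> y) * (z \<bullet> w) + l * (z \<bullet> x)"
      unfolding Mx using z w x by (simp add: scalar_prod_add_distrib[of _ "Suc m"])
    hence "(r \<bullet> y) * (z \<bullet> w) = 0" using zMx[OF x] by simp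
    hence "r \<bullet> y = 0" using zw by simp
    hence "M *\<^sub>v x = l \<cdot>\<^sub>v x" using Mx w x by auto
    then obtain c where c: "x = c \<cdot>\<^sub>v w" using geom[OF x] by auto
    have "x $ 0 = 0" unfolding x_def by (simp add: extv_index)
    hence "c = 0" using c w w0 by auto
    hence "x = 0\<^sub>v (Suc m)" using c w by auto
    hence x0: "\<And>i. i < Suc m \<Longrightarrow> x $ i = 0" by simp
    have "y = 0\<^sub>v m"
    proof (rule eq_vecI)
      fix i assume "i < dim_vec (0\<^sub>v m)"
      hence i: "i < m" by auto
      show "y $ i = 0\<^sub>v m $ i" using x0[of "Suc i"] i by (simp add: x_def extv_index)
    qed (use y in auto)
    thus False using y0 by simp
  qed
  hence "order l (char_poly M1) = 0" by (rule order_0I)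
  thus ?thesis using order_factor[OF M M1 cp] by simp
qed

definition evm :: "real mat \<Rightarrow> real poly \<Rightarrow> real mat" where
  "evm M p = mat (dim_row M) (dim_row M) (\<lambda>(i,j). \<Sum>d\<le>degree p. coeff p d * (M ^\<^sub>m d) $$ (i,j))"

lemma evm_K:
  assumes "degree p \<le> K" "i < dim_row M" "j < dim_row M"
  shows "evm M p $$ (i,j) = (\<Sum>d\<le>K. coeff p d * (M ^\<^sub>m d) $$ (i,j))"
proof -
  have "(\<Sum>d\<le>K. coeff p d * (M ^\<^sub>m d) $$ (i,j)) = (\<Sum>d\<le>degree p. coeff p d * (M ^\<^sub>m d) $$ (i,j))"
    by (rule sum.mono_neutral_right, insert assms, auto simp: coeff_eq_0)
  thus ?thesis using assms by (simp add: evm_def)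
qed

lemma pow_comm: assumes M: "M \<in> carrier_mat n n" shows "M * M ^\<^sub>m d = M ^\<^sub>m d * M"
proof (induct d)
  case 0 then show ?case using M by simp
next
  case (Suc d)
  have "M * M ^\<^sub>m Suc d = (M * M ^\<^sub>m d) * M" using M by (simp add: assoc_mult_mat[of _ n n _ n _ n])
  also have "\<dots> = M ^\<^sub>m Suc d * M" using Suc by simp
  finally show ?case .
qed

lemma evm_lin:
  assumes M: "M \<in> carrier_mat n n" and i: "i < n" and j: "j < n"
  shows "evm M ([:-l,1:] * p) $$ (i,j) = (M * evm M p) $$ (i,j) - l * evm M p $$ (i,j)"
    and "evm M ([:-l,1:] * p) $$ (i,j) = (evm M p * M) $$ (i,j) - l * evm M p $$ (i,j)"
proof -
  define K where "K = degree p"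
  have dM: "dim_row M = n" using M by auto
  have dg: "degree ([:-l,1:] * p) \<le> Suc K" unfolding K_def
    using degree_mult_le[of "[:-l,1:]" p] by simp
  have e1: "evm M ([:-l,1:] * p) $$ (i,j) = (\<Sum>d\<le>Suc K. coeff ([:-l,1:] * p) d * (M ^\<^sub>m d) $$ (i,j))"
    by (rule evm_K[OF dg], insert i j dM, auto)
  have e2: "evm M p $$ (i,j) = (\<Sum>d\<le>Suc K. coeff p d * (M ^\<^sub>m d) $$ (i,j))"
    by (rule evm_K, insert i j dM, auto simp: K_def)
  have e3: "evm M p $$ (i,j) = (\<Sum>d\<le>K. coeff p d * (M ^\<^sub>m d) $$ (i,j))"
    by (rule evm_K, insert i j dM, auto simp: K_def)
  have "[:-l,1:] * p = pCons 0 p - Polynomial.smult l p" by simp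
  hence "evm M ([:-l,1:] * p) $$ (i,j) = (\<Sum>d\<le>Suc K. coeff (pCons 0 p) d * (M ^\<^sub>m d) $$ (i,j))
      - l * evm M p $$ (i,j)"
    unfolding e1 e2 by (simp add: algebra_simps sum_subtractf sum_distrib_left)
  also have "(\<Sum>d\<le>Suc K. coeff (pCons 0 p) d * (M ^\<^sub>m d) $$ (i,j))
      = (\<Sum>d\<le>K. coeff p d * (M ^\<^sub>m Suc d) $$ (i,j))"
    by (subst sum.atMost_Suc_shift, simp)
  finally have L: "evm M ([:-l,1:] * p) $$ (i,j) = (\<Sum>d\<le>K. coeff p d * (M ^\<^sub>m Suc d) $$ (i,j)) - l * evm M p $$ (i,j)" .
  have EM: "evm M p \<in> carrier_mat n n" using dM by (simp add: evm_def)
  have "(M * evm M p) $$ (i,j) = (\<Sum>t<n. M $$ (i,t) * (\<Sum>d\<le>K. coeff p d * (M ^\<^sub>m d) $$ (t,j)))"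
    using M EM i j by (simp add: scalar_prod_def atLeast0LessThan evm_K[of p K] K_def dM)
  also have "\<dots> = (\<Sum>d\<le>K. coeff p d * (\<Sum>t<n. M $$ (i,t) * (M ^\<^sub>m d) $$ (t,j)))"
    unfolding sum_distrib_left by (subst sum.swap, simp add: algebra_simps)
  also have "\<dots> = (\<Sum>d\<le>K. coeff p d * (M ^\<^sub>m Suc d) $$ (i,j))"
  proof (rule sum.cong[OF refl])
    fix d
    have "(M ^\<^sub>m Suc d) $$ (i,j) = (M * M ^\<^sub>m d) $$ (i,j)" using pow_comm[OF M, of d] by simp
    also have "\<dots> = (\<Sum>t<n. M $$ (i,t) * (M ^\<^sub>m d) $$ (t,j))"
      using M i j by (simp add: scalar_prod_def atLeast0LessThan)
    finally show "coeff p d * (\<Sum>t<n. M $$ (i,t) * (M ^\<^sub>m d) $$ (t,j)) = coeff p d * (M ^\<^sub>m Suc d) $$ (i,j)" by simp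
  qed
  finally show "evm M ([:-l,1:] * p) $$ (i,j) = (M * evm M p) $$ (i,j) - l * evm M p $$ (i,j)" using L by simp
  have "(evm M p * M) $$ (i,j) = (\<Sum>t<n. (\<Sum>d\<le>K. coeff p d * (M ^\<^sub>m d) $$ (i,t)) * M $$ (t,j))"
    using M EM i j by (simp add: scalar_prod_def atLeast0LessThan evm_K[of p K] K_def dM)
  also have "\<dots> = (\<Sum>d\<le>K. coeff p d * (\<Sum>t<n. (M ^\<^sub>m d) $$ (i,t) * M $$ (t,j)))"
    unfolding sum_distrib_left sum_distrib_right by (subst sum.swap, simp add: algebra_simps)
  also have "\<dots> = (\<Sum>d\<le>K. coeff p d * (M ^\<^sub>m Suc d) $$ (i,j))"
  proof (rule sum.cong[OF refl])
    fix d
    have "(M ^\<^sub>m Suc d) $$ (i,j) = (\<Sum>t<n. (M ^\<^sub>m d) $$ (i,t) * M $$ (t,j))"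
      using M i j by (simp add: scalar_prod_def atLeast0LessThan)
    thus "coeff p d * (\<Sum>t<n. (M ^\<^sub>m d) $$ (i,t) * M $$ (t,j)) = coeff p d * (M ^\<^sub>m Suc d) $$ (i,j)" by simp
  qed
  finally show "evm M ([:-l,1:] * p) $$ (i,j) = (evm M p * M) $$ (i,j) - l * evm M p $$ (i,j)" using L by simp
qed

lemma evm_vec:
  assumes M: "M \<in> carrier_mat n n" and w: "w \<in> carrier_vec n" and w0: "w \<noteq> 0\<^sub>v n"
    and Mw: "M *\<^sub>v w = l \<cdot>\<^sub>v w" and i: "i < n"
  shows "(evm M p *\<^sub>v w) $ i = poly p l * w $ i"
proof -
  have dM: "dim_row M = n" using M by auto
  have ev: "eigenvector M w l" unfolding eigenvector_def using w w0 Mw dM by auto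
  have "(evm M p *\<^sub>v w) $ i = (\<Sum>j<n. (\<Sum>d\<le>degree p. coeff p d * (M ^\<^sub>m d) $$ (i,j)) * w $ j)"
    using i w dM by (simp add: evm_def scalar_prod_def atLeast0LessThan)
  also have "\<dots> = (\<Sum>d\<le>degree p. coeff p d * (\<Sum>j<n. (M ^\<^sub>m d) $$ (i,j) * w $ j))"
    unfolding sum_distrib_left sum_distrib_right by (subst sum.swap, simp add: algebra_simps)
  also have "\<dots> = (\<Sum>d\<le>degree p. coeff p d * l ^ d * w $ i)"
  proof (rule sum.cong[OF refl])
    fix d
    have "(\<Sum>j<n. (M ^\<^sub>m d) $$ (i,j) * w $ j) = (M ^\<^sub>m d *\<^sub>v w) $ i"
      using i w M by (simp add: scalar_prod_def atLeast0LessThan)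
    also have "\<dots> = l ^ d * w $ i" using eigenvector_pow[OF M ev, of d] i w by simp
    finally show "coeff p d * (\<Sum>j<n. (M ^\<^sub>m d) $$ (i,j) * w $ j) = coeff p d * l ^ d * w $ i" by simp
  qed
  also have "\<dots> = poly p l * w $ i" by (simp add: poly_altdef sum_distrib_right)
  finally show ?thesis .
qed

lemma annih:
  fixes M :: "real mat"
  assumes M: "M \<in> carrier_mat n n"
  shows "\<exists>g. g \<noteq> 0 \<and> (\<forall>i<n. \<forall>j<n. evm M g $$ (i,j) = 0)"
proof -
  define K where "K = n * n"
  define C where "C = mat (Suc K) (Suc K) (\<lambda>(r,d). if r < K then (M ^\<^sub>m d) $$ (r div n, r mod n) else (0::real))"
  have C: "C \<in> carrier_mat (Suc K) (Suc K)" unfolding C_def by auto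
  have Cr: "C = mat\<^sub>r (Suc K) (Suc K) (\<lambda>i. if i = K then 0\<^sub>v (Suc K) else row C i)"
    by (rule eq_matI, auto simp: C_def)
  have "det C = 0"
    by (subst Cr, rule det_row_0, auto simp: C_def)
  then obtain v where v: "v \<in> carrier_vec (Suc K)" and v0: "v \<noteq> 0\<^sub>v (Suc K)" and Cv: "C *\<^sub>v v = 0\<^sub>v (Suc K)"
    using det_0_iff_vec_prod_zero[OF C] by auto
  define g where "g = Poly (map (\<lambda>d. v $ d) [0..<Suc K])"
  have cg: "coeff g d = (if d < Suc K then v $ d else 0)" for d
    unfolding g_def by (auto simp: nth_default_def simp del: upt_Suc)
  have dg: "degree g \<le> Suc K" unfolding g_def using degree_Poly[of "map (\<lambda>d. v $ d) [0..<Suc K]"] by simp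
  have "g \<noteq> 0"
  proof
    assume "g = 0"
    hence "\<And>d. d < Suc K \<Longrightarrow> v $ d = 0" using cg by (metis coeff_0)
    hence "v = 0\<^sub>v (Suc K)" using v by (intro eq_vecI, auto)
    thus False using v0 by simp
  qed
  moreover have "evm M g $$ (i,j) = 0" if i: "i < n" and j: "j < n" for i j
  proof -
    have dM: "dim_row M = n" using M by auto
    have "(i+1) * n \<le> n * n" using i by (intro mult_right_mono, auto)
    hence r: "i * n + j < K" unfolding K_def using j by simp
    have dv: "(i * n + j) div n = i" "(i * n + j) mod n = j" "j mod n = j" using i j by auto
    have "0 = (C *\<^sub>v v) $ (i * n + j)" using Cv r by simp
    also have "\<dots> = (\<Sum>d<Suc K. (M ^\<^sub>m d) $$ (i,j) * v $ d)"
      using r v C by (simp del: sum.lessThan_Suc add: scalar_prod_def atLeast0LessThan C_def dv)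
    also have "\<dots> = (\<Sum>d\<le>Suc K. coeff g d * (M ^\<^sub>m d) $$ (i,j))"
      by (simp only: sum.atMost_Suc cg lessThan_Suc_atMost, simp add: mult.commute)
    also have "\<dots> = evm M g $$ (i,j)" using evm_K[OF dg, of i M j] i j dM by simp
    finally show ?thesis by simp
  qed
  ultimately show ?thesis by blast
qed


lemma col_const: fixes M F :: "real mat"
  assumes F: "F \<in> carrier_mat n n" and M: "M \<in> carrier_mat n n"
   and MF: "\<And>i j. i<n \<Longrightarrow> j<n \<Longrightarrow> (M*F)$$(i,j) = l * F$$(i,j)"
   and geom: "\<And>x. x \<in> carrier_vec n \<Longrightarrow> M *\<^sub>v x = l \<cdot>\<^sub>v x \<Longrightarrow> \<exists>c. x = c \<cdot>\<^sub>v w"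
   and w: "w \<in> carrier_vec n" and w0: "w $ 0 \<noteq> 0" and i: "i < n" and j: "j < n"
  shows "F $$ (i,j) = F $$ (0,j) / w $ 0 * w $ i"
proof -
  have eq: "M *\<^sub>v col F j = l \<cdot>\<^sub>v col F j"
    proof (rule eq_vecI)
      fix i assume "i < dim_vec (l \<cdot>\<^sub>v col F j)"
      hence i: "i < n" using F by simp
      have "(M *\<^sub>v col F j) $ i = (M * F) $$ (i,j)" using i j M F by simp
      thus "(M *\<^sub>v col F j) $ i = (l \<cdot>\<^sub>v col F j) $ i" using MF[OF i j] i j F by simp
    qed (use M F in simp)
  have cc: "col F j \<in> carrier_vec n" by (rule carrier_vecI, insert F, simp)
  from geom[OF cc eq] obtain c where cF: "col F j = c \<cdot>\<^sub>v w" by (elim exE)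
  have e1: "F $$ (i,j) = c * w $ i"
  proof -
    have "F $$ (i,j) = col F j $ i" using i j F by simp
    also have "\<dots> = c * w $ i" using i w by (simp add: cF)
    finally show ?thesis .
  qed
  have e2: "F $$ (0,j) = c * w $ 0"
  proof -
    have "F $$ (0,j) = col F j $ 0" using i j F by simp
    also have "\<dots> = c * w $ 0" using i w by (simp add: cF)
    finally show ?thesis .
  qed
  show ?thesis using w0 by (simp only: e1 e2, simp)
qed

lemma row_const: fixes M F :: "real mat"
  assumes F: "F \<in> carrier_mat n n" and M: "M \<in> carrier_mat n n"
   and FM: "\<And>i j. i<n \<Longrightarrow> j<n \<Longrightarrow> (F*M)$$(i,j) = l * F$$(i,j)"
   and geom: "\<And>x. x \<in> carrier_vec n \<Longrightarrow> transpose_mat M *\<^sub>v x = l \<cdot>\<^sub>v x \<Longrightarrow> \<exists>c. x = c \<cdot>\<^sub>v z"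
   and z: "z \<in> carrier_vec n" and z0: "z $ 0 \<noteq> 0" and i: "i < n" and j: "j < n"
  shows "F $$ (i,j) = F $$ (i,0) / z $ 0 * z $ j"
proof -
  have "transpose_mat F \<in> carrier_mat n n" using F by simp
  moreover have "\<And>i j. i<n \<Longrightarrow> j<n \<Longrightarrow> (transpose_mat M * transpose_mat F)$$(i,j) = l * transpose_mat F$$(i,j)"
  proof -
    fix i j assume i: "i < n" and j: "j < n"
    have "(transpose_mat M * transpose_mat F)$$(i,j) = (F * M) $$ (j,i)"
      using i j F M by (simp add: transpose_mult[symmetric, of F n n M n])
    thus "(transpose_mat M * transpose_mat F)$$(i,j) = l * transpose_mat F$$(i,j)" using FM[OF j i] i j F by simp
  qed
  ultimately have "transpose_mat F $$ (j,i) = transpose_mat F $$ (0,i) / z $ 0 * z $ j"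
    using col_const[of "transpose_mat F" n "transpose_mat M" l z j i] M geom z z0 i j by simp
  thus ?thesis using i j F by simp
qed
lemma alg_pos:
  fixes M :: "real mat" and w z :: "real vec"
  assumes M: "M \<in> carrier_mat (Suc m) (Suc m)" and w: "w \<in> carrier_vec (Suc m)"
    and z: "z \<in> carrier_vec (Suc m)"
    and wpos: "\<And>i. i < Suc m \<Longrightarrow> w $ i > 0" and zpos: "\<And>i. i < Suc m \<Longrightarrow> z $ i > 0"
    and Mw: "M *\<^sub>v w = l \<cdot>\<^sub>v w"
    and zM: "\<And>j. j < Suc m \<Longrightarrow> (\<Sum>i<Suc m. z $ i * M $$ (i, j)) = l * z $ j"
    and ord: "order l (char_poly M) = 1"
  shows "algebraically_positive M"
proof -
  let ?N = "Suc m"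
  have dM: "dim_row M = ?N" "dim_col M = ?N" using M by auto
  have w0: "w $ 0 \<noteq> 0" using wpos[of 0] by auto
  have z0: "z $ 0 \<noteq> 0" using zpos[of 0] by auto
  have MT: "transpose_mat M \<in> carrier_mat ?N ?N" using M by auto
  have MTz: "transpose_mat M *\<^sub>v z = l \<cdot>\<^sub>v z"
  proof (rule eq_vecI)
    fix j assume "j < dim_vec (l \<cdot>\<^sub>v z)"
    hence j: "j < ?N" using z by auto
    have "(transpose_mat M *\<^sub>v z) $ j = (\<Sum>i<?N. z $ i * M $$ (i, j))"
      using j z M by (simp add: scalar_prod_def atLeast0LessThan mult.commute)
    thus "(transpose_mat M *\<^sub>v z) $ j = (l \<cdot>\<^sub>v z) $ j" using zM[OF j] j z by simp
  qed (use M z in auto)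
  have ordT: "order l (char_poly (transpose_mat M)) = 1" using ord M by simp
  obtain g where g0: "g \<noteq> 0" and gZ: "\<forall>i<?N. \<forall>j<?N. evm M g $$ (i,j) = 0"
    using annih[OF M] by blast
  obtain h where gh: "g = [:-l,1:] ^ order l g * h" and hnd: "\<not> [:-l,1:] dvd h"
    using order_decomp[OF g0] by blast
  have hl: "poly h l \<noteq> 0" using hnd poly_eq_0_iff_dvd by blast
  define f where "f i = [:-l,1:] ^ i * h" for i
  define Z where "Z p = (\<forall>i<?N. \<forall>j<?N. evm M p $$ (i,j) = 0)" for p
  have Zk: "Z (f (order l g))" using gZ gh unfolding Z_def f_def by metis
  have wne: "w \<noteq> 0\<^sub>v ?N" using w0 by auto
  have nZ0: "\<not> Z (f 0)"
  proof
    assume "Z (f 0)"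
    hence "\<forall>j<?N. evm M h $$ (0,j) = 0" unfolding Z_def f_def by simp
    hence "(evm M h *\<^sub>v w) $ 0 = 0" using w dM by (simp add: evm_def scalar_prod_def)
    moreover have "(evm M h *\<^sub>v w) $ 0 = poly h l * w $ 0" by (rule evm_vec[OF M w wne Mw], simp)
    ultimately show False using hl w0 by simp
  qed
  define i0 where "i0 = (LEAST i. Z (f i))"
  have Zi0: "Z (f i0)" unfolding i0_def by (rule LeastI, rule Zk)
  have "i0 \<noteq> 0" using Zi0 nZ0 by (metis)
  then obtain i1 where i01: "i0 = Suc i1" by (cases i0, auto)
  have nZ1: "\<not> Z (f i1)" using not_less_Least[of i1 "\<lambda>i. Z (f i)"] i01 unfolding i0_def by auto
  define F where "F = evm M (f i1)"
  have F: "F \<in> carrier_mat ?N ?N" unfolding F_def evm_def using dM by simp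
  have fS: "f (Suc i1) = [:-l,1:] * f i1" unfolding f_def by (simp only: power_Suc mult.assoc)
  have MF: "(M * F) $$ (i,j) = l * F $$ (i,j)" and FM: "(F * M) $$ (i,j) = l * F $$ (i,j)"
    if "i < ?N" "j < ?N" for i j
  proof -
    have "evm M (f (Suc i1)) $$ (i,j) = 0" using Zi0 that unfolding i01 Z_def by blast
    thus "(M * F) $$ (i,j) = l * F $$ (i,j)" "(F * M) $$ (i,j) = l * F $$ (i,j)"
      using evm_lin[OF M that, of l "f i1"] unfolding fS F_def by linarith+
  qed
  have colF: "F $$ (i,j) = F $$ (0,j) / w $ 0 * w $ i" if i: "i < ?N" and j: "j < ?N" for i j
    by (rule col_const[OF F M MF geom_one[OF M w w0 Mw ord] w w0 i j])
  have rowF: "F $$ (i,j) = F $$ (i,0) / z $ 0 * z $ j" if i: "i < ?N" and j: "j < ?N" for i j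
    by (rule row_const[OF F M FM geom_one[OF MT z z0 MTz ordT] z z0 i j])
  define c where "c = F $$ (0,0) / (w $ 0 * z $ 0)"
  have Fc: "F $$ (i,j) = c * (w $ i * z $ j)" if i: "i < ?N" and j: "j < ?N" for i j
    using colF[OF i j] rowF[of 0 j] j w0 z0 unfolding c_def by (simp add: field_simps)
  have c0: "c \<noteq> 0"
  proof
    assume "c = 0"
    hence "Z (f i1)" using Fc unfolding Z_def F_def by simp
    thus False using nZ1 by simp
  qed
  define p where "p = Polynomial.smult (1 / c) (f i1)"
  show ?thesis unfolding algebraically_positive_def
  proof (intro exI[of _ p] allI impI)
    fix i j assume "i < dim_row M" "j < dim_col M"
    hence i: "i < ?N" and j: "j < ?N" using dM by auto
    have "(\<Sum>d\<le>degree p. coeff p d * (M ^\<^sub>m d) $$ (i, j)) = (1 / c) * F $$ (i,j)"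
      using c0 i j dM unfolding p_def F_def evm_def by (simp add: sum_distrib_left mult.assoc)
    also have "\<dots> = w $ i * z $ j" using Fc[OF i j] c0 by simp
    finally show "(\<Sum>d\<le>degree p. coeff p d * (M ^\<^sub>m d) $$ (i, j)) > 0" using wpos[OF i] zpos[OF j] by simp
  qed
qed




lemma sum_shift1: fixes N :: nat shows "(\<Sum>j<N. f (j+1)) = (\<Sum>q\<in>{1..N}. (f q :: real))"
  by (induct N) auto

lemma sum_splitN: fixes k n :: nat assumes "1 \<le> k"
  shows "(\<Sum>q\<in>{1..k + (n-1)}. (f q :: real)) = (\<Sum>q\<in>{1..k}. f q) + (\<Sum>i\<in>{1..n-1}. f (k+i))"
proof -
  have "(\<Sum>q\<in>{1..k + (n-1)}. f q) = (\<Sum>q\<in>{1..k}. f q) + (\<Sum>q\<in>{k+1..k+(n-1)}. f q)"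
    using assms by (intro sum.ub_add_nat) auto
  also have "(\<Sum>q\<in>{k+1..k+(n-1)}. f q) = (\<Sum>i\<in>{1..n-1}. f (k+i))"
    using sum.shift_bounds_cl_nat_ivl[of f 1 k "n-1"] by (simp add: add.commute)
  finally show ?thesis .
qed

lemma sum_split0: fixes n :: nat assumes "1 \<le> n" shows "(\<Sum>t<n. (f t :: real)) = f 0 + (\<Sum>i\<in>{1..n-1}. f i)"
proof -
  have "{..<n} = insert 0 {1..n-1}" using assms by auto
  thus ?thesis by simp
qed

lemma sum_splitk: fixes k :: nat assumes "1 \<le> k"
  shows "(\<Sum>q\<in>{1..k}. (f q :: real)) = (\<Sum>q\<in>{1..k-1}. f q) + f k"
proof -
  have "{1..k} = insert k {1..k-1}" using assms by auto
  moreover have "k \<notin> {1..k-1}" using assms by auto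
  ultimately show ?thesis by (simp add: add.commute)
qed


definition Bg :: "real mat \<Rightarrow> nat \<Rightarrow> (nat \<Rightarrow> nat \<Rightarrow> real) \<Rightarrow> (nat \<Rightarrow> real) \<Rightarrow> nat \<Rightarrow> nat \<Rightarrow> nat \<Rightarrow> real" where
  "Bg A k T R s p q = (if p < k then (if q \<le> k then T p q else 0)
    else if p = k then (if q \<le> k then R q else A $$ (0, q - k))
    else (if q = s then A $$ (p - k, 0) else if q \<le> k then 0 else A $$ (p - k, q - k)))"

context
  fixes A :: "real mat" and k n s :: nat and T :: "nat \<Rightarrow> nat \<Rightarrow> real" and R :: "nat \<Rightarrow> real"
  assumes k1: "1 \<le> k" and s: "s \<in> {1..k}"
begin

lemma row_lt: assumes p: "p \<in> {1..k-1}"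
  shows "(\<Sum>q\<in>{1..k+(n-1)}. Bg A k T R s p q * X q) = (\<Sum>q\<in>{1..k}. T p q * X q)"
proof -
  have "(\<Sum>q\<in>{1..k+(n-1)}. Bg A k T R s p q * X q) = (\<Sum>q\<in>{1..k}. Bg A k T R s p q * X q) + (\<Sum>i\<in>{1..n-1}. Bg A k T R s p (k+i) * X (k+i))"
    by (rule sum_splitN[OF k1])
  also have "(\<Sum>i\<in>{1..n-1}. Bg A k T R s p (k+i) * X (k+i)) = 0"
    using p by (intro sum.neutral, auto simp: Bg_def)
  also have "(\<Sum>q\<in>{1..k}. Bg A k T R s p q * X q) = (\<Sum>q\<in>{1..k}. T p q * X q)"
    using p by (intro sum.cong, auto simp: Bg_def)
  finally show ?thesis by simp
qed

lemma row_k: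
  shows "(\<Sum>q\<in>{1..k+(n-1)}. Bg A k T R s k q * X q) = (\<Sum>q\<in>{1..k}. R q * X q) + (\<Sum>i\<in>{1..n-1}. A $$ (0,i) * X (k+i))"
proof -
  have "(\<Sum>q\<in>{1..k+(n-1)}. Bg A k T R s k q * X q) = (\<Sum>q\<in>{1..k}. Bg A k T R s k q * X q) + (\<Sum>i\<in>{1..n-1}. Bg A k T R s k (k+i) * X (k+i))"
    by (rule sum_splitN[OF k1])
  also have "(\<Sum>i\<in>{1..n-1}. Bg A k T R s k (k+i) * X (k+i)) = (\<Sum>i\<in>{1..n-1}. A $$ (0,i) * X (k+i))"
    by (intro sum.cong, auto simp: Bg_def)
  also have "(\<Sum>q\<in>{1..k}. Bg A k T R s k q * X q) = (\<Sum>q\<in>{1..k}. R q * X q)"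
    by (intro sum.cong, auto simp: Bg_def)
  finally show ?thesis by simp
qed

lemma row_gt: assumes i': "i' \<in> {1..n-1}"
  shows "(\<Sum>q\<in>{1..k+(n-1)}. Bg A k T R s (k+i') q * X q) = A $$ (i',0) * X s + (\<Sum>i\<in>{1..n-1}. A $$ (i',i) * X (k+i))"
proof -
  have "(\<Sum>q\<in>{1..k+(n-1)}. Bg A k T R s (k+i') q * X q) = (\<Sum>q\<in>{1..k}. Bg A k T R s (k+i') q * X q) + (\<Sum>i\<in>{1..n-1}. Bg A k T R s (k+i') (k+i) * X (k+i))"
    by (rule sum_splitN[OF k1])
  also have "(\<Sum>i\<in>{1..n-1}. Bg A k T R s (k+i') (k+i) * X (k+i)) = (\<Sum>i\<in>{1..n-1}. A $$ (i',i) * X (k+i))"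
    using i' s by (intro sum.cong, auto simp: Bg_def)
  also have "(\<Sum>q\<in>{1..k}. Bg A k T R s (k+i') q * X q) = (\<Sum>q\<in>{1..k}. (if q = s then A $$ (i',0) * X q else 0))"
    using i' by (intro sum.cong, auto simp: Bg_def)
  also have "\<dots> = A $$ (i',0) * X s" using s by (simp add: sum.delta')
  finally show ?thesis by simp
qed

lemma col_le: assumes q: "q \<in> {1..k}"
  shows "(\<Sum>p\<in>{1..k+(n-1)}. Z p * Bg A k T R s p q) = (\<Sum>p\<in>{1..k-1}. Z p * T p q) + Z k * R q
     + (if q = s then (\<Sum>i\<in>{1..n-1}. Z (k+i) * A $$ (i,0)) else 0)"
proof -
  have "(\<Sum>p\<in>{1..k+(n-1)}. Z p * Bg A k T R s p q) = (\<Sum>p\<in>{1..k}. Z p * Bg A k T R s p q) + (\<Sum>i\<in>{1..n-1}. Z (k+i) * Bg A k T R s (k+i) q)"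
    by (rule sum_splitN[OF k1])
  also have "(\<Sum>p\<in>{1..k}. Z p * Bg A k T R s p q) = (\<Sum>p\<in>{1..k-1}. Z p * Bg A k T R s p q) + Z k * Bg A k T R s k q"
    by (rule sum_splitk[OF k1])
  also have "(\<Sum>p\<in>{1..k-1}. Z p * Bg A k T R s p q) = (\<Sum>p\<in>{1..k-1}. Z p * T p q)"
    using q by (intro sum.cong, auto simp: Bg_def)
  also have "Bg A k T R s k q = R q" using q by (simp add: Bg_def)
  also have "(\<Sum>i\<in>{1..n-1}. Z (k+i) * Bg A k T R s (k+i) q) = (if q = s then (\<Sum>i\<in>{1..n-1}. Z (k+i) * A $$ (i,0)) else 0)"
    using q by (cases "q = s", auto simp: Bg_def intro!: sum.cong)
  finally show ?thesis by simp
qed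

lemma col_gt: assumes j': "j' \<in> {1..n-1}"
  shows "(\<Sum>p\<in>{1..k+(n-1)}. Z p * Bg A k T R s p (k+j')) = Z k * A $$ (0,j') + (\<Sum>i\<in>{1..n-1}. Z (k+i) * A $$ (i,j'))"
proof -
  have "(\<Sum>p\<in>{1..k+(n-1)}. Z p * Bg A k T R s p (k+j')) = (\<Sum>p\<in>{1..k}. Z p * Bg A k T R s p (k+j')) + (\<Sum>i\<in>{1..n-1}. Z (k+i) * Bg A k T R s (k+i) (k+j'))"
    by (rule sum_splitN[OF k1])
  also have "(\<Sum>p\<in>{1..k}. Z p * Bg A k T R s p (k+j')) = (\<Sum>p\<in>{1..k-1}. Z p * Bg A k T R s p (k+j')) + Z k * Bg A k T R s k (k+j')"
    by (rule sum_splitk[OF k1])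
  also have "(\<Sum>p\<in>{1..k-1}. Z p * Bg A k T R s p (k+j')) = 0"
    using j' by (intro sum.neutral, auto simp: Bg_def)
  also have "Bg A k T R s k (k+j') = A $$ (0,j')" using j' by (simp add: Bg_def)
  also have "(\<Sum>i\<in>{1..n-1}. Z (k+i) * Bg A k T R s (k+i) (k+j')) = (\<Sum>i\<in>{1..n-1}. Z (k+i) * A $$ (i,j'))"
    using j' s by (intro sum.cong, auto simp: Bg_def)
  finally show ?thesis by simp
qed

end


lemma Bmult:
  fixes b :: "nat \<Rightarrow> nat \<Rightarrow> real"
  assumes b: "\<forall>p\<in>{1..N}. \<forall>q\<in>{1..N}. b p q = G p q" and x: "x \<in> carrier_vec N" and i: "i < N"
  shows "(mat_of_1 N b *\<^sub>v x) $ i = (\<Sum>q\<in>{1..N}. G (i+1) q * x $ (q - 1))"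
proof -
  have "(mat_of_1 N b *\<^sub>v x) $ i = (\<Sum>j<N. b (i+1) (j+1) * x $ j)"
    using x i by (simp add: mat_of_1_def scalar_prod_def atLeast0LessThan)
  also have "\<dots> = (\<Sum>j<N. G (i+1) (j+1) * x $ ((j+1) - 1))"
    using b i by (intro sum.cong, auto)
  also have "\<dots> = (\<Sum>q\<in>{1..N}. G (i+1) q * x $ (q - 1))"
    by (rule sum_shift1[of "\<lambda>q. G (i+1) q * x $ (q - 1)"])
  finally show ?thesis .
qed

lemma Bleft:
  fixes b :: "nat \<Rightarrow> nat \<Rightarrow> real"
  assumes b: "\<forall>p\<in>{1..N}. \<forall>q\<in>{1..N}. b p q = G p q" and j: "j < N"
  shows "(\<Sum>i<N. vec_of_1 N Z $ i * mat_of_1 N b $$ (i, j)) = (\<Sum>p\<in>{1..N}. Z p * G p (j+1))"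
proof -
  have "(\<Sum>i<N. vec_of_1 N Z $ i * mat_of_1 N b $$ (i, j)) = (\<Sum>i<N. Z (i+1) * G (i+1) (j+1))"
    using b j by (intro sum.cong, auto simp: mat_of_1_def vec_of_1_def)
  also have "\<dots> = (\<Sum>p\<in>{1..N}. Z p * G p (j+1))"
    by (rule sum_shift1[of "\<lambda>p. Z p * G p (j+1)"])
  finally show ?thesis .
qed

lemma rows_eq:
  fixes B :: "real mat" and z :: "real vec"
  assumes B: "B \<in> carrier_mat N N" and z: "z \<in> carrier_vec N"
    and h: "\<And>j. j < N \<Longrightarrow> (\<Sum>i<N. z $ i * B $$ (i, j)) = l * z $ j"
  shows "mat_of_rows N [z] * B = l \<cdot>\<^sub>m mat_of_rows N [z]"
proof (rule eq_matI)
  fix i j assume "i < dim_row (l \<cdot>\<^sub>m mat_of_rows N [z])" "j < dim_col (l \<cdot>\<^sub>m mat_of_rows N [z])"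
  hence i: "i = 0" and j: "j < N" by auto
  have "(mat_of_rows N [z] * B) $$ (i, j) = (\<Sum>t<N. z $ t * B $$ (t, j))"
    using i j B z by (simp add: scalar_prod_def atLeast0LessThan mat_of_rows_def)
  also have "\<dots> = l * z $ j" by (rule h[OF j])
  finally show "(mat_of_rows N [z] * B) $$ (i, j) = (l \<cdot>\<^sub>m mat_of_rows N [z]) $$ (i, j)"
    using i j by (simp add: mat_of_rows_def)
qed (use B in auto)

lemma rows_eqD:
  fixes A :: "real mat" and v :: "real vec"
  assumes A: "A \<in> carrier_mat n n" and v: "v \<in> carrier_vec n"
    and h: "mat_of_rows n [v] * A = l \<cdot>\<^sub>m mat_of_rows n [v]" and j: "j < n"
  shows "(\<Sum>i<n. v $ i * A $$ (i, j)) = l * v $ j"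
proof -
  have "(mat_of_rows n [v] * A) $$ (0, j) = (\<Sum>t<n. v $ t * A $$ (t, j))"
    using j A v by (simp add: scalar_prod_def atLeast0LessThan mat_of_rows_def)
  moreover have "(l \<cdot>\<^sub>m mat_of_rows n [v]) $$ (0, j) = l * v $ j" using j by (simp add: mat_of_rows_def)
  ultimately show ?thesis using h by simp
qed


lemma gen:
  fixes A :: "real mat" and k n s :: nat and T :: "nat \<Rightarrow> nat \<Rightarrow> real" and R :: "nat \<Rightarrow> real"
    and b :: "nat \<Rightarrow> nat \<Rightarrow> real" and Z :: "nat \<Rightarrow> real" and u v :: "real vec" and l :: real
  assumes n1: "1 \<le> n" and k1: "1 \<le> k" and s: "s \<in> {1..k}"
    and A: "A \<in> carrier_mat n n" and ordA: "order l (char_poly A) = 1"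
    and u: "u \<in> carrier_vec n" and upos: "\<forall>i<n. u $ i > 0"
    and v: "v \<in> carrier_vec n" and vpos: "\<forall>i<n. v $ i > 0"
    and Au: "A *\<^sub>v u = l \<cdot>\<^sub>v u"
    and vA: "\<forall>j<n. (\<Sum>i<n. v $ i * A $$ (i, j)) = l * v $ j"
    and b: "\<forall>p\<in>{1..k+(n-1)}. \<forall>q\<in>{1..k+(n-1)}. b p q = Bg A k T R s p q"
    and hT: "\<forall>p\<in>{1..k-1}. (\<Sum>q\<in>{1..k}. T p q) = l"
    and hR: "(\<Sum>q\<in>{1..k}. R q) = A $$ (0,0)"
    and Zpos: "\<forall>p\<in>{1..k}. Z p > 0" and Zv: "\<forall>p. k \<le> p \<longrightarrow> Z p = v $ (p - k)"
    and hZ: "\<forall>q\<in>{1..k}. (\<Sum>p\<in>{1..k-1}. Z p * T p q) + v $ 0 * R q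
        + (if q = s then (\<Sum>i\<in>{1..n-1}. v $ i * A $$ (i,0)) else 0) = l * Z q"
    and h4: "\<And>x. (\<forall>p\<in>{1..k-1}. (\<Sum>q\<in>{1..k}. T p q * x q) = l * x p) \<Longrightarrow> (\<forall>q\<in>{1..k}. x q = x k)"
  shows "simple_eigenvalue (mat_of_1 (k+(n-1)) b) l
    \<and> mat_of_1 (k+(n-1)) b *\<^sub>v vec_of_1 (k+(n-1)) (wvec u k) = l \<cdot>\<^sub>v vec_of_1 (k+(n-1)) (wvec u k)
    \<and> mat_of_rows (k+(n-1)) [vec_of_1 (k+(n-1)) Z] * mat_of_1 (k+(n-1)) b = l \<cdot>\<^sub>m mat_of_rows (k+(n-1)) [vec_of_1 (k+(n-1)) Z]
    \<and> algebraically_positive (mat_of_1 (k+(n-1)) b)"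
proof -
  define N where "N = k + (n-1)"
  define B where "B = mat_of_1 N b"
  define W where "W = wvec u k"
  define w where "w = vec_of_1 N W"
  define z where "z = vec_of_1 N Z"
  let ?G = "Bg A k T R s"
  have bN: "\<forall>p\<in>{1..N}. \<forall>q\<in>{1..N}. b p q = ?G p q" using b unfolding N_def .
  have B: "B \<in> carrier_mat N N" unfolding B_def mat_of_1_def by simp
  have w: "w \<in> carrier_vec N" unfolding w_def vec_of_1_def by simp
  have z: "z \<in> carrier_vec N" unfolding z_def vec_of_1_def by simp
  obtain m where Nm: "N = Suc m" using k1 unfolding N_def by (cases "k + (n-1)", auto)
  obtain n' where nn: "n = Suc n'" using n1 by (cases n, auto)
  have Wk: "W q = u $ 0" if "q \<in> {1..k}" for q using that unfolding W_def wvec_def by auto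
  have Wk': "W (k+i) = u $ i" if "i \<in> {1..n-1}" for i using that k1 unfolding W_def wvec_def by auto
  have Au': "(\<Sum>t<n. A $$ (i,t) * u $ t) = l * u $ i" if "i < n" for i
  proof -
    have "(A *\<^sub>v u) $ i = (\<Sum>t<n. A $$ (i,t) * u $ t)" using that A u
      by (simp add: scalar_prod_def atLeast0LessThan)
    thus ?thesis using Au that u by simp
  qed
  have Zk: "Z (k+i) = v $ i" for i using Zv by simp
  have Zk0: "Z k = v $ 0" using Zv by simp
  have rowW: "(\<Sum>q\<in>{1..N}. ?G p q * W q) = l * W p" if p: "p \<in> {1..N}" for p
  proof -
    consider (lt) "p < k" | (eq) "p = k" | (gt) "p > k" by linarith
    thus ?thesis
    proof cases
      case lt
      hence p': "p \<in> {1..k-1}" using p by auto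
      have "(\<Sum>q\<in>{1..N}. ?G p q * W q) = (\<Sum>q\<in>{1..k}. T p q * W q)"
        unfolding N_def by (rule row_lt[OF k1 s p'])
      also have "\<dots> = (\<Sum>q\<in>{1..k}. T p q) * u $ 0" by (simp add: Wk sum_distrib_right)
      also have "\<dots> = l * W p" using hT p' Wk[of p] lt p by auto
      finally show ?thesis .
    next
      case eq
      have "(\<Sum>q\<in>{1..N}. ?G p q * W q) = (\<Sum>q\<in>{1..k}. R q * W q) + (\<Sum>i\<in>{1..n-1}. A $$ (0,i) * W (k+i))"
        unfolding N_def eq by (rule row_k[OF k1 s])
      also have "\<dots> = A $$ (0,0) * u $ 0 + (\<Sum>i\<in>{1..n-1}. A $$ (0,i) * u $ i)"
        using hR by (simp add: Wk Wk' sum_distrib_right[symmetric])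
      also have "\<dots> = (\<Sum>t<n. A $$ (0,t) * u $ t)" using sum_split0[OF n1] by simp
      also have "\<dots> = l * W p" using Au'[of 0] n1 eq k1 Wk[of k] by simp
      finally show ?thesis .
    next
      case gt
      define i' where "i' = p - k"
      have i': "i' \<in> {1..n-1}" and pi: "p = k + i'" using gt p unfolding i'_def N_def by auto
      have "(\<Sum>q\<in>{1..N}. ?G p q * W q) = A $$ (i',0) * W s + (\<Sum>i\<in>{1..n-1}. A $$ (i',i) * W (k+i))"
        unfolding N_def pi by (rule row_gt[OF k1 s i'])
      also have "\<dots> = A $$ (i',0) * u $ 0 + (\<Sum>i\<in>{1..n-1}. A $$ (i',i) * u $ i)"
        using s by (simp add: Wk Wk')
      also have "\<dots> = (\<Sum>t<n. A $$ (i',t) * u $ t)" using sum_split0[OF n1] by simp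
      also have "\<dots> = l * W p" using Au'[of i'] i' n1 pi Wk'[OF i'] by auto
      finally show ?thesis .
    qed
  qed
  have Bw: "B *\<^sub>v w = l \<cdot>\<^sub>v w"
  proof (rule eq_vecI)
    fix i assume "i < dim_vec (l \<cdot>\<^sub>v w)"
    hence i: "i < N" using w by auto
    have "(B *\<^sub>v w) $ i = (\<Sum>q\<in>{1..N}. ?G (i+1) q * w $ (q - 1))"
      unfolding B_def by (rule Bmult[OF bN w i])
    also have "\<dots> = (\<Sum>q\<in>{1..N}. ?G (i+1) q * W q)"
      by (intro sum.cong, auto simp: w_def vec_of_1_def)
    also have "\<dots> = l * W (i+1)" using rowW[of "i+1"] i by auto
    finally show "(B *\<^sub>v w) $ i = (l \<cdot>\<^sub>v w) $ i" using i by (simp add: w_def vec_of_1_def)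
  qed (use B w in auto)
  have colZ: "(\<Sum>p\<in>{1..N}. Z p * ?G p q) = l * Z q" if q: "q \<in> {1..N}" for q
  proof (cases "q \<le> k")
    case True
    hence q': "q \<in> {1..k}" using q by auto
    have "(\<Sum>p\<in>{1..N}. Z p * ?G p q) = (\<Sum>p\<in>{1..k-1}. Z p * T p q) + Z k * R q
     + (if q = s then (\<Sum>i\<in>{1..n-1}. Z (k+i) * A $$ (i,0)) else 0)"
      unfolding N_def by (rule col_le[OF k1 s q'])
    also have "(\<Sum>i\<in>{1..n-1}. Z (k+i) * A $$ (i,0)) = (\<Sum>i\<in>{1..n-1}. v $ i * A $$ (i,0))"
      by (simp add: Zk)
    also have "(\<Sum>p\<in>{1..k-1}. Z p * T p q) + Z k * R q + (if q = s then (\<Sum>i\<in>{1..n-1}. v $ i * A $$ (i,0)) else 0) = l * Z q"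
      unfolding Zk0 by (rule bspec[OF hZ q'])
    finally show ?thesis .
  next
    case False
    define j' where "j' = q - k"
    have j': "j' \<in> {1..n-1}" and qj: "q = k + j'" using False q unfolding j'_def N_def by auto
    have "(\<Sum>p\<in>{1..N}. Z p * ?G p q) = Z k * A $$ (0,j') + (\<Sum>i\<in>{1..n-1}. Z (k+i) * A $$ (i,j'))"
      unfolding N_def qj by (rule col_gt[OF k1 s j'])
    also have "\<dots> = (\<Sum>i<n. v $ i * A $$ (i,j'))" using sum_split0[OF n1, of "\<lambda>i. v $ i * A $$ (i,j')"]
      by (simp add: Zk Zv)
    also have "\<dots> = l * Z q" using vA j' n1 qj Zk by auto
    finally show ?thesis .
  qed
  have zB: "(\<Sum>i<N. z $ i * B $$ (i, j)) = l * z $ j" if j: "j < N" for j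
  proof -
    have "(\<Sum>i<N. z $ i * B $$ (i, j)) = (\<Sum>p\<in>{1..N}. Z p * ?G p (j+1))"
      unfolding z_def B_def by (rule Bleft[OF bN j])
    also have "\<dots> = l * Z (j+1)" using colZ[of "j+1"] j by auto
    finally show ?thesis using j by (simp add: z_def vec_of_1_def)
  qed
  have zBm: "mat_of_rows N [z] * B = l \<cdot>\<^sub>m mat_of_rows N [z]" by (rule rows_eq[OF B z zB])
  have Wpos: "W q > 0" if "q \<in> {1..N}" for q
  proof (cases "q \<le> k")
    case True thus ?thesis using that Wk[of q] upos n1 by auto
  next
    case False
    hence q1: "q = k + (q - k)" and q2: "q - k \<in> {1..n-1}" and q3: "q - k < n" using that unfolding N_def by auto
    have "W q = u $ (q - k)" using Wk'[OF q2] q1 by metis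
    thus ?thesis using upos q3 by simp
  qed
  have Zpos': "Z q > 0" if "q \<in> {1..N}" for q
  proof (cases "q \<le> k")
    case True thus ?thesis using that Zpos by auto
  next
    case False
    hence "q - k < n" using that unfolding N_def by auto
    thus ?thesis using Zv vpos False by auto
  qed
  have wpos: "w $ i > 0" if "i < N" for i using Wpos[of "i+1"] that by (simp add: w_def vec_of_1_def)
  have zpos: "z $ i > 0" if "i < N" for i using Zpos'[of "i+1"] that by (simp add: z_def vec_of_1_def)
  have "u $ 0 > 0" using upos n1 by simp
  hence u0: "u $ 0 \<noteq> 0" by simp
  have geom: "\<exists>c. x = c \<cdot>\<^sub>v w" if x: "x \<in> carrier_vec N" and Bx: "B *\<^sub>v x = l \<cdot>\<^sub>v x" for x
  proof -
    define X where "X q = x $ (q - 1)" for q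
    have rowX: "(\<Sum>q\<in>{1..N}. ?G p q * X q) = l * X p" if p: "p \<in> {1..N}" for p
    proof -
      have "(B *\<^sub>v x) $ (p - 1) = (\<Sum>q\<in>{1..N}. ?G (p - 1 + 1) q * x $ (q - 1))"
        unfolding B_def by (rule Bmult[OF bN x], insert p, auto)
      moreover have "p - 1 + 1 = p" using p by auto
      moreover have "(B *\<^sub>v x) $ (p - 1) = l * x $ (p - 1)" using Bx p x by auto
      ultimately show ?thesis unfolding X_def by simp
    qed
    have Xk: "\<forall>q\<in>{1..k}. X q = X k"
    proof (rule h4, intro ballI)
      fix p assume p: "p \<in> {1..k-1}"
      have "(\<Sum>q\<in>{1..k}. T p q * X q) = (\<Sum>q\<in>{1..N}. ?G p q * X q)"
        unfolding N_def by (rule row_lt[OF k1 s p, symmetric])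
      also have "\<dots> = l * X p" by (rule rowX, insert p, auto simp: N_def)
      finally show "(\<Sum>q\<in>{1..k}. T p q * X q) = l * X p" .
    qed
    define y where "y = vec n (\<lambda>i. X (k+i))"
    have y: "y \<in> carrier_vec n" unfolding y_def by simp
    have Ay: "A *\<^sub>v y = l \<cdot>\<^sub>v y"
    proof (rule eq_vecI)
      fix i' assume "i' < dim_vec (l \<cdot>\<^sub>v y)"
      hence i': "i' < n" using y by auto
      have Ay_i: "(A *\<^sub>v y) $ i' = (\<Sum>t<n. A $$ (i',t) * X (k+t))"
        using A i' by (simp add: y_def scalar_prod_def atLeast0LessThan)
      also have "\<dots> = A $$ (i',0) * X k + (\<Sum>i\<in>{1..n-1}. A $$ (i',i) * X (k+i))"
        using sum_split0[OF n1, of "\<lambda>t. A $$ (i',t) * X (k+t)"] by simp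
      also have "\<dots> = l * X (k+i')"
      proof (cases "i' = 0")
        case True
        have "(\<Sum>q\<in>{1..N}. ?G k q * X q) = (\<Sum>q\<in>{1..k}. R q * X q) + (\<Sum>i\<in>{1..n-1}. A $$ (0,i) * X (k+i))"
          unfolding N_def by (rule row_k[OF k1 s])
        also have "(\<Sum>q\<in>{1..k}. R q * X q) = (\<Sum>q\<in>{1..k}. R q * X k)"
          by (rule sum.cong[OF refl]) (metis Xk)
        also have "\<dots> = A $$ (0,0) * X k"
          using hR by (simp add: sum_distrib_right[symmetric])
        finally have e: "(\<Sum>q\<in>{1..N}. ?G k q * X q) = A $$ (0,0) * X k + (\<Sum>i\<in>{1..n-1}. A $$ (0,i) * X (k+i))" .
        have "k \<in> {1..N}" using k1 by (simp add: N_def)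
        from rowX[OF this] e True show ?thesis by simp
      next
        case False
        hence i'': "i' \<in> {1..n-1}" using i' by auto
        have "(\<Sum>q\<in>{1..N}. ?G (k+i') q * X q) = A $$ (i',0) * X s + (\<Sum>i\<in>{1..n-1}. A $$ (i',i) * X (k+i))"
          unfolding N_def by (rule row_gt[OF k1 s i''])
        moreover have "X s = X k" using Xk s by blast
        moreover have "k + i' \<in> {1..N}" using i'' by (auto simp: N_def)
        ultimately show ?thesis using rowX[of "k+i'"] by simp
      qed
      finally show "(A *\<^sub>v y) $ i' = (l \<cdot>\<^sub>v y) $ i'" using i' by (simp add: y_def)
    qed (use A y in auto)
    have A': "A \<in> carrier_mat (Suc n') (Suc n')" using A nn by simp
    have u': "u \<in> carrier_vec (Suc n')" and y': "y \<in> carrier_vec (Suc n')" using u y nn by auto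
    from geom_one[OF A' u' u0 Au ordA y' Ay] obtain c where yc: "y = c \<cdot>\<^sub>v u" by (elim exE)
    have "x = c \<cdot>\<^sub>v w"
    proof (rule eq_vecI)
      fix i assume "i < dim_vec (c \<cdot>\<^sub>v w)"
      hence i: "i < N" using w by auto
      have yi: "X (k+t) = c * u $ t" if t: "t < n" for t
      proof -
        have "X (k+t) = y $ t" using t by (simp add: y_def)
        also have "\<dots> = c * u $ t" using t u by (simp add: yc)
        finally show ?thesis .
      qed
      have "x $ i = X (i+1)" unfolding X_def by simp
      also have "\<dots> = c * W (i+1)"
      proof (cases "i + 1 \<le> k")
        case True
        hence "i + 1 \<in> {1..k}" by simp
        hence "X (i+1) = X k" using Xk by blast
        also have "\<dots> = c * u $ 0" using yi[of 0] n1 by simp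
        finally show ?thesis using Wk[of "i+1"] True by auto
      next
        case False
        hence q1: "i + 1 = k + (i+1-k)" and q2: "i+1-k \<in> {1..n-1}" and q3: "i+1-k < n"
          using i unfolding N_def by auto
        have "W (i+1) = u $ (i+1-k)" using Wk'[OF q2] q1 by metis
        moreover have "X (i+1) = c * u $ (i+1-k)" using yi[OF q3] q1 by metis
        ultimately show ?thesis by simp
      qed
      finally show "x $ i = (c \<cdot>\<^sub>v w) $ i" using i by (simp add: w_def vec_of_1_def)
    qed (use x w in auto)
    thus ?thesis by blast
  qed
  have BS: "B \<in> carrier_mat (Suc m) (Suc m)" using B Nm by simp
  have wS: "w \<in> carrier_vec (Suc m)" and zS: "z \<in> carrier_vec (Suc m)" using w z Nm by auto
  have w0: "w $ 0 \<noteq> 0" using wpos[of 0] Nm by auto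
  have zw: "z \<bullet> w \<noteq> 0"
  proof -
    have "z \<bullet> w = (\<Sum>i<N. z $ i * w $ i)" using w by (simp add: scalar_prod_def atLeast0LessThan)
    also have "\<dots> > 0" using wpos zpos Nm by (intro sum_pos, auto)
    finally show ?thesis by simp
  qed
  note zB' = zB[unfolded Nm] and geom' = geom[unfolded Nm] and wpos' = wpos[unfolded Nm]
    and zpos' = zpos[unfolded Nm]
  have ordB: "order l (char_poly B) = 1"
    by (rule alg_simple[OF BS wS w0 Bw zS zB' zw geom'])
  have apB: "algebraically_positive B"
    by (rule alg_pos[OF BS wS zS wpos' zpos' Bw zB' ordB])
  have "simple_eigenvalue B l \<and> B *\<^sub>v w = l \<cdot>\<^sub>v w \<and> mat_of_rows N [z] * B = l \<cdot>\<^sub>m mat_of_rows N [z]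
    \<and> algebraically_positive B" using ordB Bw zBm apB unfolding simple_eigenvalue_def by blast
  thus ?thesis unfolding B_def w_def z_def W_def N_def .
qed





lemma sup_sum: fixes k q :: nat assumes q: "q \<in> {1..k}"
  shows "(\<Sum>p\<in>{1..k-1}. (if q = p+1 then (f p :: real) else 0)) = (if q = 1 then 0 else f (q-1))"
proof (cases "q = 1")
  case True
  have "\<forall>p\<in>{1..k-1}. (if q = p+1 then f p else 0) = 0" using True by auto
  thus ?thesis using True by simp
next
  case False
  have "(\<Sum>p\<in>{1..k-1}. (if q = p+1 then f p else 0)) = (\<Sum>p\<in>{1..k-1}. (if p = q - 1 then f p else 0))"
    using False q by (intro sum.cong, auto)
  also have "\<dots> = f (q-1)"
  proof -
    have "q - 1 \<in> {1..k-1}" using False q by auto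
    thus ?thesis by (simp add: sum.delta')
  qed
  finally show ?thesis using False by simp
qed

lemma chain_eq: fixes x :: "nat \<Rightarrow> real"
  assumes h: "\<And>p. a \<le> p \<Longrightarrow> p < b \<Longrightarrow> x (Suc p) = x p" and q: "a \<le> q" "q \<le> b"
  shows "x q = x b"
  using q
proof (induct "b - q" arbitrary: q)
  case 0 thus ?case by simp
next
  case (Suc d)
  have d: "d = b - Suc q" using Suc.hyps(2) by arith
  have "x (Suc q) = x b" using Suc.hyps(1)[OF d] Suc.hyps(2) Suc.prems by auto
  moreover have "x (Suc q) = x q" using h[of q] Suc.hyps(2) Suc.prems by auto
  ultimately show ?case by simp
qed

locale ctx =
  fixes A :: "real mat" and k n :: nat and l :: real and u v :: "real vec"
  assumes n1: "1 \<le> n" and k1: "1 \<le> k"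
    and A: "A \<in> carrier_mat n n" and A0: "A $$ (0,0) > 0" and lpos: "l > 0" and ordA: "order l (char_poly A) = 1"
    and u: "u \<in> carrier_vec n" and upos: "\<forall>i<n. u $ i > 0"
    and v: "v \<in> carrier_vec n" and vpos: "\<forall>i<n. v $ i > 0"
    and Au: "A *\<^sub>v u = l \<cdot>\<^sub>v u"
    and vA: "\<forall>j<n. (\<Sum>i<n. v $ i * A $$ (i, j)) = l * v $ j"
begin

lemma Sval: "(\<Sum>i\<in>{1..n-1}. v $ i * A $$ (i,0)) = (l - A $$ (0,0)) * v $ 0"
proof -
  have "(\<Sum>i<n. v $ i * A $$ (i, 0)) = l * v $ 0" using vA n1 by auto
  thus ?thesis using sum_split0[OF n1, of "\<lambda>i. v $ i * A $$ (i, 0)"] by (simp add: algebra_simps)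
qed

lemma v0: "v $ 0 > 0" using vpos n1 by simp

lemma part1: assumes j: "j \<in> {1..k}"
  shows "simple_eigenvalue (mat_of_1 (k+(n-1)) (B1 A l k n j)) l
    \<and> mat_of_1 (k+(n-1)) (B1 A l k n j) *\<^sub>v vec_of_1 (k+(n-1)) (wvec u k) = l \<cdot>\<^sub>v vec_of_1 (k+(n-1)) (wvec u k)
    \<and> mat_of_rows (k+(n-1)) [vec_of_1 (k+(n-1)) (z1 A l v k j)] * mat_of_1 (k+(n-1)) (B1 A l k n j)
        = l \<cdot>\<^sub>m mat_of_rows (k+(n-1)) [vec_of_1 (k+(n-1)) (z1 A l v k j)]
    \<and> algebraically_positive (mat_of_1 (k+(n-1)) (B1 A l k n j))"
proof -
  define T where "T p q = (if q = p+1 then l else 0)" for p q :: nat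
  define R where "R q = (if q = 1 then A $$ (0,0) else 0)" for q :: nat
  let ?Z = "z1 A l v k j"
  show ?thesis
  proof (rule gen[OF n1 k1 j A ordA u upos v vpos Au vA])
    show "\<forall>p\<in>{1..k+(n-1)}. \<forall>q\<in>{1..k+(n-1)}. B1 A l k n j p q = Bg A k T R j p q"
    proof (intro ballI)
      fix p q assume p: "p \<in> {1..k+(n-1)}" and q: "q \<in> {1..k+(n-1)}"
      consider "p < k" | "p = k" | "k < p" by linarith
      thus "B1 A l k n j p q = Bg A k T R j p q"
      proof cases
        case 1 thus ?thesis using p q unfolding B1_def Bg_def T_def by auto
      next
        case 2 thus ?thesis using p q n1 unfolding B1_def Bg_def R_def by auto
      next
        case 3 thus ?thesis using p q j n1 unfolding B1_def Bg_def by auto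
      qed
    qed
    show "\<forall>p\<in>{1..k-1}. (\<Sum>q\<in>{1..k}. T p q) = l"
      unfolding T_def by (auto simp: sum.delta')
    show "(\<Sum>q\<in>{1..k}. R q) = A $$ (0,0)" unfolding R_def using k1 by (simp add: sum.delta)
    show "\<forall>p\<in>{1..k}. ?Z p > 0" using v0 A0 lpos by (auto simp: z1_def)
    show "\<forall>p. k \<le> p \<longrightarrow> ?Z p = v $ (p - k)" using j by (auto simp: z1_def)
    show "\<forall>q\<in>{1..k}. (\<Sum>p\<in>{1..k-1}. ?Z p * T p q) + v $ 0 * R q
        + (if q = j then (\<Sum>i\<in>{1..n-1}. v $ i * A $$ (i,0)) else 0) = l * ?Z q"
    proof
      fix q assume q: "q \<in> {1..k}"
      have "(\<Sum>p\<in>{1..k-1}. ?Z p * T p q) = (\<Sum>p\<in>{1..k-1}. (if q = p+1 then ?Z p * l else 0))"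
        unfolding T_def by (intro sum.cong, auto)
      also have "\<dots> = (if q = 1 then 0 else ?Z (q-1) * l)" by (rule sup_sum[OF q])
      finally have e: "(\<Sum>p\<in>{1..k-1}. ?Z p * T p q) = (if q = 1 then 0 else ?Z (q-1) * l)" .
      define a where "a = A $$ (0,0) * v $ 0 / l"
      have zq: "?Z r = (if r < j then a else v $ 0)" if "r \<in> {1..k}" for r
        using that j unfolding z1_def a_def by auto
      have la: "l * a = A $$ (0,0) * v $ 0" unfolding a_def using lpos by simp
      show "(\<Sum>p\<in>{1..k-1}. ?Z p * T p q) + v $ 0 * R q
        + (if q = j then (\<Sum>i\<in>{1..n-1}. v $ i * A $$ (i,0)) else 0) = l * ?Z q"
      proof (cases "q = 1")
        case True
        have z1q: "?Z q = (if 1 < j then a else v $ 0)" using zq[OF q] True by simp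
        show ?thesis
        proof (cases "j = 1")
          case True
          thus ?thesis unfolding e Sval R_def z1q using \<open>q = 1\<close> by (simp add: algebra_simps)
        next
          case False
          hence "1 < j" using j by auto
          thus ?thesis unfolding e Sval R_def z1q using \<open>q = 1\<close> la by simp
        qed
      next
        case False
        hence q1: "q - 1 \<in> {1..k}" using q by auto
        have "q - 1 < j \<longleftrightarrow> q \<le> j" using False q by auto
        thus ?thesis unfolding e Sval R_def using zq[OF q] zq[OF q1] la False
          by (cases "q < j"; cases "q = j"; auto simp: algebra_simps)
      qed
    qed
    show "\<And>x. (\<forall>p\<in>{1..k-1}. (\<Sum>q\<in>{1..k}. T p q * x q) = l * x p) \<Longrightarrow> (\<forall>q\<in>{1..k}. x q = x k)"
    proof -
      fix x :: "nat \<Rightarrow> real"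
      assume h: "\<forall>p\<in>{1..k-1}. (\<Sum>q\<in>{1..k}. T p q * x q) = l * x p"
      have st: "x (Suc p) = x p" if "1 \<le> p" "p < k" for p
      proof -
        have "(\<Sum>q\<in>{1..k}. T p q * x q) = (\<Sum>q\<in>{1..k}. if q = p + 1 then l * x q else 0)"
          unfolding T_def by (intro sum.cong, auto)
        also have "\<dots> = l * x (p+1)" using that by (simp add: sum.delta')
        finally show ?thesis using h that lpos by auto
      qed
      show "\<forall>q\<in>{1..k}. x q = x k"
      proof
        fix q assume q: "q \<in> {1..k}"
        show "x q = x k" by (rule chain_eq[of 1 k x q], rule st, insert q, auto)
      qed
    qed
  qed
qed


lemma Q2: assumes j: "j \<in> {1..k-1}" and s: "s \<in> {1..k} - {j+1}" and e: "e \<noteq> 0"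
  shows "B2 A l e k n j s j s * z2 A l e v k j s j
                 + (\<Sum>i = 1..n-1. B2 A l e k n j s (k + i) s * z2 A l e v k j s (k + i))
     = (if s \<le> j then (l / e - A $$ (0, 0)) * v $ 0 else (l - e * A $$ (0, 0)) * v $ 0)"
proof -
  have b: "B2 A l e k n j s j s = (1 - e) * l" using j s unfolding B2_def by auto
  have z: "z2 A l e v k j s j = (if s \<le> j then v $ 0 / e else A $$ (0,0) * v $ 0 / l)"
    using j s unfolding z2_def by auto
  have "(\<Sum>i = 1..n-1. B2 A l e k n j s (k + i) s * z2 A l e v k j s (k + i)) = (\<Sum>i = 1..n-1. v $ i * A $$ (i,0))"
    using j s by (intro sum.cong, auto simp: B2_def z2_def)
  also have "\<dots> = (l - A $$ (0,0)) * v $ 0" by (rule Sval)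
  finally have S: "(\<Sum>i = 1..n-1. B2 A l e k n j s (k + i) s * z2 A l e v k j s (k + i)) = (l - A $$ (0,0)) * v $ 0" .
  show ?thesis unfolding b z S using e lpos by (auto simp: field_simps)
qed

lemma Q3: assumes s: "s \<in> {2..k}"
  shows "B3 A l e k n s k s * z3 A l e v k s k
                 + (\<Sum>i = 1..n-1. B3 A l e k n s (k + i) s * z3 A l e v k s (k + i))
     = (l - e * A $$ (0, 0)) * v $ 0"
proof -
  have b: "B3 A l e k n s k s = (1 - e) * A $$ (0,0)" using s unfolding B3_def by auto
  have z: "z3 A l e v k s k = v $ 0" using s unfolding z3_def by auto
  have "(\<Sum>i = 1..n-1. B3 A l e k n s (k + i) s * z3 A l e v k s (k + i)) = (\<Sum>i = 1..n-1. v $ i * A $$ (i,0))"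
    using s by (intro sum.cong, auto simp: B3_def z3_def)
  also have "\<dots> = (l - A $$ (0,0)) * v $ 0" by (rule Sval)
  finally have S: "(\<Sum>i = 1..n-1. B3 A l e k n s (k + i) s * z3 A l e v k s (k + i)) = (l - A $$ (0,0)) * v $ 0" .
  show ?thesis unfolding b z S by (simp add: algebra_simps)
qed

end




context ctx begin

lemma part2: assumes j: "j \<in> {1..k-1}" and s: "s \<in> {1..k} - {j+1}" and e: "0 < e" "e < 1"
  shows "simple_eigenvalue (mat_of_1 (k+(n-1)) (B2 A l e k n j s)) l
    \<and> mat_of_1 (k+(n-1)) (B2 A l e k n j s) *\<^sub>v vec_of_1 (k+(n-1)) (wvec u k) = l \<cdot>\<^sub>v vec_of_1 (k+(n-1)) (wvec u k)
    \<and> mat_of_rows (k+(n-1)) [vec_of_1 (k+(n-1)) (z2 A l e v k j s)] * mat_of_1 (k+(n-1)) (B2 A l e k n j s)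
        = l \<cdot>\<^sub>m mat_of_rows (k+(n-1)) [vec_of_1 (k+(n-1)) (z2 A l e v k j s)]
    \<and> algebraically_positive (mat_of_1 (k+(n-1)) (B2 A l e k n j s))"
proof -
  define T where "T p q = (if p = j \<and> q = j+1 then e*l else if q = p+1 then l else if p = j \<and> q = s then (1-e)*l else 0)" for p q :: nat
  define R where "R q = (if q = 1 then A $$ (0,0) else 0)" for q :: nat
  let ?Z = "z2 A l e v k j s"
  have s1: "s \<in> {1..k}" and sj: "s \<noteq> j+1" using s by auto
  have Tsplit: "T p q = (if q = p+1 then (if p = j then e*l else l) else 0) + (if p = j \<and> q = s then (1-e)*l else 0)" for p q
    unfolding T_def using sj by auto
  show ?thesis
  proof (rule gen[OF n1 k1 s1 A ordA u upos v vpos Au vA])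
    show "\<forall>p\<in>{1..k+(n-1)}. \<forall>q\<in>{1..k+(n-1)}. B2 A l e k n j s p q = Bg A k T R s p q"
    proof (intro ballI)
      fix p q assume p: "p \<in> {1..k+(n-1)}" and q: "q \<in> {1..k+(n-1)}"
      consider "p < k" | "p = k" | "k < p" by linarith
      thus "B2 A l e k n j s p q = Bg A k T R s p q"
      proof cases
        case 1 thus ?thesis using p q j s1 unfolding B2_def Bg_def T_def by auto
      next
        case 2 thus ?thesis using p q n1 j unfolding B2_def Bg_def R_def by auto
      next
        case 3 thus ?thesis using p q j s1 n1 unfolding B2_def Bg_def by auto
      qed
    qed
    show "\<forall>p\<in>{1..k-1}. (\<Sum>q\<in>{1..k}. T p q) = l"
    proof
      fix p assume p: "p \<in> {1..k-1}"
      have "(\<Sum>q\<in>{1..k}. T p q) = (\<Sum>q\<in>{1..k}. (if q = p+1 then (if p = j then e*l else l) else 0))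
          + (\<Sum>q\<in>{1..k}. (if p = j \<and> q = s then (1-e)*l else 0))"
        unfolding Tsplit by (rule sum.distrib)
      also have "(\<Sum>q\<in>{1..k}. (if q = p+1 then (if p = j then e*l else l) else 0)) = (if p = j then e*l else l)"
      proof -
        have "p + 1 \<in> {1..k}" using p by auto
        thus ?thesis by (simp add: sum.delta')
      qed
      also have "(\<Sum>q\<in>{1..k}. (if p = j \<and> q = s then (1-e)*l else 0)) = (if p = j then (1-e)*l else 0)"
        using s1 by (cases "p = j", simp_all add: sum.delta')
      finally show "(\<Sum>q\<in>{1..k}. T p q) = l" by (cases "p = j", simp_all add: algebra_simps)
    qed
    show "(\<Sum>q\<in>{1..k}. R q) = A $$ (0,0)" unfolding R_def using k1 by (simp add: sum.delta)
    show "\<forall>p\<in>{1..k}. ?Z p > 0" using v0 A0 lpos e by (auto simp: z2_def)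
    show "\<forall>p. k \<le> p \<longrightarrow> ?Z p = v $ (p - k)" using j s1 by (auto simp: z2_def)
    show "\<forall>q\<in>{1..k}. (\<Sum>p\<in>{1..k-1}. ?Z p * T p q) + v $ 0 * R q
        + (if q = s then (\<Sum>i\<in>{1..n-1}. v $ i * A $$ (i,0)) else 0) = l * ?Z q"
    proof
      fix q assume q: "q \<in> {1..k}"
      have "(\<Sum>p\<in>{1..k-1}. ?Z p * T p q) = (\<Sum>p\<in>{1..k-1}. (if q = p+1 then ?Z p * (if p = j then e*l else l) else 0))
          + (\<Sum>p\<in>{1..k-1}. (if p = j then (if q = s then ?Z p * ((1-e)*l) else 0) else 0))"
        unfolding Tsplit distrib_left sum.distrib[symmetric] by (intro sum.cong, auto)
      also have "(\<Sum>p\<in>{1..k-1}. (if q = p+1 then ?Z p * (if p = j then e*l else l) else 0))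
          = (if q = 1 then 0 else ?Z (q-1) * (if q - 1 = j then e*l else l))" by (rule sup_sum[OF q])
      also have "(\<Sum>p\<in>{1..k-1}. (if p = j then (if q = s then ?Z p * ((1-e)*l) else 0) else 0))
          = (if q = s then ?Z j * ((1-e)*l) else 0)" using j by (simp add: sum.delta)
      finally have eq: "(\<Sum>p\<in>{1..k-1}. ?Z p * T p q) = (if q = 1 then 0 else ?Z (q-1) * (if q - 1 = j then e*l else l))
         + (if q = s then ?Z j * ((1-e)*l) else 0)" .
      have zq: "?Z r = (if s \<le> j then (if r < s then A $$ (0,0) * v $ 0 / l else if r \<le> j then v $ 0 / e else v $ 0)
           else (if r \<le> j then A $$ (0,0) * v $ 0 / l else if r < s then e * A $$ (0,0) * v $ 0 / l else v $ 0))"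
        if "r \<in> {1..k}" for r
        using that j s1 unfolding z2_def by auto
      have jk: "j \<in> {1..k}" using j by auto
      have l0: "l \<noteq> 0" using lpos by simp
      have e0: "e \<noteq> 0" using e by simp
      show "(\<Sum>p\<in>{1..k-1}. ?Z p * T p q) + v $ 0 * R q
        + (if q = s then (\<Sum>i\<in>{1..n-1}. v $ i * A $$ (i,0)) else 0) = l * ?Z q"
      proof (cases "q = 1")
        case True
        thus ?thesis unfolding eq Sval R_def zq[OF q] zq[OF jk] using j sj l0 e0 s1
          by (auto simp: field_simps)
      next
        case False
        hence q1: "q - 1 \<in> {1..k}" using q by auto
        show ?thesis unfolding eq Sval R_def zq[OF q] zq[OF jk] zq[OF q1] using False j sj q l0 e0 s1
          by (auto simp: field_simps)
      qed
    qed
    show "\<And>x. (\<forall>p\<in>{1..k-1}. (\<Sum>q\<in>{1..k}. T p q * x q) = l * x p) \<Longrightarrow> (\<forall>q\<in>{1..k}. x q = x k)"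
    proof -
      fix x :: "nat \<Rightarrow> real"
      assume h: "\<forall>p\<in>{1..k-1}. (\<Sum>q\<in>{1..k}. T p q * x q) = l * x p"
      have rs: "(\<Sum>q\<in>{1..k}. T p q * x q) = (if p = j then e * l * x (p+1) + (1-e) * l * x s else l * x (p+1))"
        if p: "p \<in> {1..k-1}" for p
      proof -
        have "(\<Sum>q\<in>{1..k}. T p q * x q) = (\<Sum>q\<in>{1..k}. (if q = p+1 then (if p = j then e*l else l) * x q else 0))
          + (\<Sum>q\<in>{1..k}. (if p = j then (if q = s then (1-e)*l * x q else 0) else 0))"
          unfolding Tsplit distrib_right sum.distrib[symmetric] by (intro sum.cong, auto)
        also have "(\<Sum>q\<in>{1..k}. (if q = p+1 then (if p = j then e*l else l) * x q else 0)) = (if p = j then e*l else l) * x (p+1)"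
        proof -
          have "p + 1 \<in> {1..k}" using p by auto
          thus ?thesis by (simp add: sum.delta')
        qed
        also have "(\<Sum>q\<in>{1..k}. (if p = j then (if q = s then (1-e)*l * x q else 0) else 0)) = (if p = j then (1-e)*l * x s else 0)"
          using s1 by (cases "p = j", simp_all add: sum.delta')
        finally show ?thesis by (cases "p = j", simp_all)
      qed
      have st: "x (Suc p) = x p" if "1 \<le> p" "p < k" "p \<noteq> j" for p
      proof -
        have "l * x (p+1) = l * x p" using h rs[of p] that by auto
        thus ?thesis using lpos by simp
      qed
      have rj: "e * l * x (j+1) + (1-e) * l * x s = l * x j" using h rs[of j] j by auto
      have c1: "x q = x j" if "1 \<le> q" "q \<le> j" for q
        by (rule chain_eq[of 1 j x q], rule st, insert that j, auto)
      have c2: "x q = x k" if "j+1 \<le> q" "q \<le> k" for q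
        by (rule chain_eq[of "j+1" k x q], rule st, insert that j, auto)
      have xj: "x (j+1) = x j"
      proof (cases "s \<le> j")
        case True
        hence "x s = x j" using c1[of s] s1 by auto
        hence "e * l * x (j+1) = e * l * x j" using rj by (simp add: algebra_simps)
        thus ?thesis using e lpos by simp
      next
        case False
        hence "s \<ge> j+2" using sj by auto
        hence "x s = x (j+1)" using c2[of s] c2[of "j+1"] s1 j by auto
        hence "l * x (j+1) = l * x j" using rj by (simp add: algebra_simps)
        thus ?thesis using lpos by simp
      qed
      have st2: "x (Suc p) = x p" if "1 \<le> p" "p < k" for p
        using st[OF that] xj that by (cases "p = j", auto)
      show "\<forall>q\<in>{1..k}. x q = x k"
      proof
        fix q assume q: "q \<in> {1..k}"
        show "x q = x k" by (rule chain_eq[of 1 k x q], rule st2, insert q, auto)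
      qed
    qed
  qed
qed


lemma part3: assumes s: "s \<in> {2..k}" and e: "0 < e" "e < 1"
  shows "simple_eigenvalue (mat_of_1 (k+(n-1)) (B3 A l e k n s)) l
    \<and> mat_of_1 (k+(n-1)) (B3 A l e k n s) *\<^sub>v vec_of_1 (k+(n-1)) (wvec u k) = l \<cdot>\<^sub>v vec_of_1 (k+(n-1)) (wvec u k)
    \<and> mat_of_rows (k+(n-1)) [vec_of_1 (k+(n-1)) (z3 A l e v k s)] * mat_of_1 (k+(n-1)) (B3 A l e k n s)
        = l \<cdot>\<^sub>m mat_of_rows (k+(n-1)) [vec_of_1 (k+(n-1)) (z3 A l e v k s)]
    \<and> algebraically_positive (mat_of_1 (k+(n-1)) (B3 A l e k n s))"
proof -
  define T where "T p q = (if q = p+1 then l else 0)" for p q :: nat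
  define R where "R q = (if q = 1 then e * A $$ (0,0) else if q = s then (1-e) * A $$ (0,0) else 0)" for q :: nat
  let ?Z = "z3 A l e v k s"
  have s1: "s \<in> {1..k}" and s2: "2 \<le> s" using s by auto
  show ?thesis
  proof (rule gen[OF n1 k1 s1 A ordA u upos v vpos Au vA])
    show "\<forall>p\<in>{1..k+(n-1)}. \<forall>q\<in>{1..k+(n-1)}. B3 A l e k n s p q = Bg A k T R s p q"
    proof (intro ballI)
      fix p q assume p: "p \<in> {1..k+(n-1)}" and q: "q \<in> {1..k+(n-1)}"
      consider "p < k" | "p = k" | "k < p" by linarith
      thus "B3 A l e k n s p q = Bg A k T R s p q"
      proof cases
        case 1 thus ?thesis using p q unfolding B3_def Bg_def T_def by auto
      next
        case 2 thus ?thesis using p q n1 s1 s2 unfolding B3_def Bg_def R_def by auto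
      next
        case 3 thus ?thesis using p q s1 n1 unfolding B3_def Bg_def by auto
      qed
    qed
    show "\<forall>p\<in>{1..k-1}. (\<Sum>q\<in>{1..k}. T p q) = l"
    proof
      fix p assume p: "p \<in> {1..k-1}"
      have "p + 1 \<in> {1..k}" using p by auto
      thus "(\<Sum>q\<in>{1..k}. T p q) = l" unfolding T_def by (simp add: sum.delta')
    qed
    show "(\<Sum>q\<in>{1..k}. R q) = A $$ (0,0)"
    proof -
      have "(\<Sum>q\<in>{1..k}. R q) = (\<Sum>q\<in>{1..k}. (if q = 1 then e * A $$ (0,0) else 0))
          + (\<Sum>q\<in>{1..k}. (if q = s then (1-e) * A $$ (0,0) else 0))"
        unfolding R_def sum.distrib[symmetric] using s2 by (intro sum.cong, auto)
      also have "\<dots> = e * A $$ (0,0) + (1-e) * A $$ (0,0)" using k1 s1 by (simp add: sum.delta)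
      finally show ?thesis by (simp add: algebra_simps)
    qed
    show "\<forall>p\<in>{1..k}. ?Z p > 0" using v0 A0 lpos e by (auto simp: z3_def)
    show "\<forall>p. k \<le> p \<longrightarrow> ?Z p = v $ (p - k)" using s1 by (auto simp: z3_def)
    show "\<forall>q\<in>{1..k}. (\<Sum>p\<in>{1..k-1}. ?Z p * T p q) + v $ 0 * R q
        + (if q = s then (\<Sum>i\<in>{1..n-1}. v $ i * A $$ (i,0)) else 0) = l * ?Z q"
    proof
      fix q assume q: "q \<in> {1..k}"
      have "(\<Sum>p\<in>{1..k-1}. ?Z p * T p q) = (\<Sum>p\<in>{1..k-1}. (if q = p+1 then ?Z p * l else 0))"
        unfolding T_def by (intro sum.cong, auto)
      also have "\<dots> = (if q = 1 then 0 else ?Z (q-1) * l)" by (rule sup_sum[OF q])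
      finally have eq: "(\<Sum>p\<in>{1..k-1}. ?Z p * T p q) = (if q = 1 then 0 else ?Z (q-1) * l)" .
      have zq: "?Z r = (if r < s then e * A $$ (0,0) * v $ 0 / l else v $ 0)" if "r \<in> {1..k}" for r
        using that s1 unfolding z3_def by auto
      have l0: "l \<noteq> 0" using lpos by simp
      show "(\<Sum>p\<in>{1..k-1}. ?Z p * T p q) + v $ 0 * R q
        + (if q = s then (\<Sum>i\<in>{1..n-1}. v $ i * A $$ (i,0)) else 0) = l * ?Z q"
      proof (cases "q = 1")
        case True
        thus ?thesis unfolding eq Sval R_def zq[OF q] using s2 l0 by (auto simp: field_simps)
      next
        case False
        hence q1: "q - 1 \<in> {1..k}" using q by auto
        show ?thesis unfolding eq Sval R_def zq[OF q] zq[OF q1] using False s2 q l0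
          by (auto simp: field_simps)
      qed
    qed
    show "\<And>x. (\<forall>p\<in>{1..k-1}. (\<Sum>q\<in>{1..k}. T p q * x q) = l * x p) \<Longrightarrow> (\<forall>q\<in>{1..k}. x q = x k)"
    proof -
      fix x :: "nat \<Rightarrow> real"
      assume h: "\<forall>p\<in>{1..k-1}. (\<Sum>q\<in>{1..k}. T p q * x q) = l * x p"
      have st: "x (Suc p) = x p" if "1 \<le> p" "p < k" for p
      proof -
        have "(\<Sum>q\<in>{1..k}. T p q * x q) = (\<Sum>q\<in>{1..k}. if q = p + 1 then l * x q else 0)"
          unfolding T_def by (intro sum.cong, auto)
        also have "\<dots> = l * x (p+1)" using that by (simp add: sum.delta')
        finally show ?thesis using h that lpos by auto
      qed
      show "\<forall>q\<in>{1..k}. x q = x k"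
      proof
        fix q assume q: "q \<in> {1..k}"
        show "x q = x k" by (rule chain_eq[of 1 k x q], rule st, insert q, auto)
      qed
    qed
  qed
qed

end




theorem theorem2p4:
  fixes e l :: real and n k :: nat and A :: "real mat" and u v :: "real vec"
  assumes e: "0 < e" "e < 1"
    and nk: "n \<ge> 1" "k \<ge> 1"
    and A: "A \<in> carrier_mat n n" "A $$ (0, 0) > 0"
    and l: "l > 0" "simple_eigenvalue A l"
    and uv: "dim_vec u = n" "dim_vec v = n" "\<forall>i < n. u $ i > 0" "\<forall>i < n. v $ i > 0"
    and right: "A *\<^sub>v u = l \<cdot>\<^sub>v u"
    and left: "mat_of_rows n [v] * A = l \<cdot>\<^sub>m mat_of_rows n [v]"
  shows
    "(\<forall>j \<in> {1..k}.
        let N = k + n - 1; B = mat_of_1 N (B1 A l k n j);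
            w = vec_of_1 N (wvec u k); z = vec_of_1 N (z1 A l v k j) in
        simple_eigenvalue B l \<and> B *\<^sub>v w = l \<cdot>\<^sub>v w \<and>
        mat_of_rows N [z] * B = l \<cdot>\<^sub>m mat_of_rows N [z] \<and>
        algebraically_positive B)
   \<and> (\<forall>j \<in> {1..k-1}. \<forall>s \<in> {1..k} - {j + 1}.
        let N = k + n - 1; B = mat_of_1 N (B2 A l e k n j s);
            w = vec_of_1 N (wvec u k); z = vec_of_1 N (z2 A l e v k j s);
            Q = (\<lambda>e'. B2 A l e' k n j s j s * z2 A l e' v k j s j
                 + (\<Sum>i = 1..n-1. B2 A l e' k n j s (k + i) s * z2 A l e' v k j s (k + i))) in
        simple_eigenvalue B l \<and> B *\<^sub>v w = l \<cdot>\<^sub>v w \<and>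
        mat_of_rows N [z] * B = l \<cdot>\<^sub>m mat_of_rows N [z] \<and>
        algebraically_positive B \<and>
        Q e = (if s \<le> j then (l / e - A $$ (0, 0)) * v $ 0 else (l - e * A $$ (0, 0)) * v $ 0) \<and>
        (\<exists>e' > 0. e' < 1 \<and> Q e' > 0))
   \<and> (\<forall>s \<in> {2..k}.
        let N = k + n - 1; B = mat_of_1 N (B3 A l e k n s);
            w = vec_of_1 N (wvec u k); z = vec_of_1 N (z3 A l e v k s);
            Q = (\<lambda>e'. B3 A l e' k n s k s * z3 A l e' v k s k
                 + (\<Sum>i = 1..n-1. B3 A l e' k n s (k + i) s * z3 A l e' v k s (k + i))) in
        simple_eigenvalue B l \<and> B *\<^sub>v w = l \<cdot>\<^sub>v w \<and>
        mat_of_rows N [z] * B = l \<cdot>\<^sub>m mat_of_rows N [z] \<and>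
        algebraically_positive B \<and>
        Q e = (l - e * A $$ (0, 0)) * v $ 0 \<and>
        (\<exists>e' > 0. e' < 1 \<and> Q e' > 0))"
proof -
  have n1: "1 \<le> n" and k1: "1 \<le> k" using nk by auto
  have uc: "u \<in> carrier_vec n" using uv(1) by (rule carrier_vecI)
  have vc: "v \<in> carrier_vec n" using uv(2) by (rule carrier_vecI)
  have ordA: "order l (char_poly A) = 1" using l(2) unfolding simple_eigenvalue_def .
  have vA: "\<forall>j<n. (\<Sum>i<n. v $ i * A $$ (i, j)) = l * v $ j" using rows_eqD[OF A(1) vc left] by auto
  interpret C: ctx A k n l u v
    by (unfold_locales, insert n1 k1 A l(1) ordA uc uv(3) vc uv(4) right vA, auto)
  have Nn: "k + n - 1 = k + (n - 1)" using n1 by simp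
  have e0: "e \<noteq> 0" using e by simp
  define e'' where "e'' = l / (l + A $$ (0,0))"
  have e''0: "0 < e''" unfolding e''_def using l(1) A(2) by simp
  have e''ne: "e'' \<noteq> 0" using e''0 by simp
  have e''1: "e'' < 1" unfolding e''_def using l(1) A(2) by simp
  have e''a: "l / e'' - A $$ (0,0) = l" unfolding e''_def using l(1) A(2) by (simp add: field_simps)
  have e''b: "l - e'' * A $$ (0,0) > 0" unfolding e''_def using l(1) A(2) by (simp add: field_simps)
  have v0: "v $ 0 > 0" using uv(4) n1 by simp
  show ?thesis unfolding Let_def Nn
  proof (intro conjI)
    show "\<forall>j\<in>{1..k}. simple_eigenvalue (mat_of_1 (k + (n - 1)) (B1 A l k n j)) l \<and>
        mat_of_1 (k + (n - 1)) (B1 A l k n j) *\<^sub>v vec_of_1 (k + (n - 1)) (wvec u k) =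
        l \<cdot>\<^sub>v vec_of_1 (k + (n - 1)) (wvec u k) \<and>
        mat_of_rows (k + (n - 1)) [vec_of_1 (k + (n - 1)) (z1 A l v k j)] * mat_of_1 (k + (n - 1)) (B1 A l k n j) =
        l \<cdot>\<^sub>m mat_of_rows (k + (n - 1)) [vec_of_1 (k + (n - 1)) (z1 A l v k j)] \<and>
        algebraically_positive (mat_of_1 (k + (n - 1)) (B1 A l k n j))"
      using C.part1 by blast
  next
    show "\<forall>j\<in>{1..k - 1}. \<forall>s\<in>{1..k} - {j + 1}.
       simple_eigenvalue (mat_of_1 (k + (n - 1)) (B2 A l e k n j s)) l \<and>
       mat_of_1 (k + (n - 1)) (B2 A l e k n j s) *\<^sub>v vec_of_1 (k + (n - 1)) (wvec u k) =
       l \<cdot>\<^sub>v vec_of_1 (k + (n - 1)) (wvec u k) \<and>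
       mat_of_rows (k + (n - 1)) [vec_of_1 (k + (n - 1)) (z2 A l e v k j s)] * mat_of_1 (k + (n - 1)) (B2 A l e k n j s) =
       l \<cdot>\<^sub>m mat_of_rows (k + (n - 1)) [vec_of_1 (k + (n - 1)) (z2 A l e v k j s)] \<and>
       algebraically_positive (mat_of_1 (k + (n - 1)) (B2 A l e k n j s)) \<and>
       B2 A l e k n j s j s * z2 A l e v k j s j + (\<Sum>i = 1..n - 1. B2 A l e k n j s (k + i) s * z2 A l e v k j s (k + i)) =
       (if s \<le> j then (l / e - A $$ (0, 0)) * v $ 0 else (l - e * A $$ (0, 0)) * v $ 0) \<and>
       (\<exists>e'>0. e' < 1 \<and> 0 < B2 A l e' k n j s j s * z2 A l e' v k j s j + (\<Sum>i = 1..n - 1. B2 A l e' k n j s (k + i) s * z2 A l e' v k j s (k + i)))"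
    proof (intro ballI)
      fix j s assume j: "j \<in> {1..k-1}" and s: "s \<in> {1..k} - {j+1}"
      have ex: "\<exists>e'>0. e' < 1 \<and> 0 < B2 A l e' k n j s j s * z2 A l e' v k j s j + (\<Sum>i = 1..n - 1. B2 A l e' k n j s (k + i) s * z2 A l e' v k j s (k + i))"
      proof (intro exI[of _ e''] conjI e''0 e''1)
        show "0 < B2 A l e'' k n j s j s * z2 A l e'' v k j s j + (\<Sum>i = 1..n - 1. B2 A l e'' k n j s (k + i) s * z2 A l e'' v k j s (k + i))"
          unfolding C.Q2[OF j s e''ne] using e''0 e''a e''b v0 l(1) by (auto intro: mult_pos_pos)
      qed
      show "simple_eigenvalue (mat_of_1 (k + (n - 1)) (B2 A l e k n j s)) l \<and>
       mat_of_1 (k + (n - 1)) (B2 A l e k n j s) *\<^sub>v vec_of_1 (k + (n - 1)) (wvec u k) =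
       l \<cdot>\<^sub>v vec_of_1 (k + (n - 1)) (wvec u k) \<and>
       mat_of_rows (k + (n - 1)) [vec_of_1 (k + (n - 1)) (z2 A l e v k j s)] * mat_of_1 (k + (n - 1)) (B2 A l e k n j s) =
       l \<cdot>\<^sub>m mat_of_rows (k + (n - 1)) [vec_of_1 (k + (n - 1)) (z2 A l e v k j s)] \<and>
       algebraically_positive (mat_of_1 (k + (n - 1)) (B2 A l e k n j s)) \<and>
       B2 A l e k n j s j s * z2 A l e v k j s j + (\<Sum>i = 1..n - 1. B2 A l e k n j s (k + i) s * z2 A l e v k j s (k + i)) =
       (if s \<le> j then (l / e - A $$ (0, 0)) * v $ 0 else (l - e * A $$ (0, 0)) * v $ 0) \<and>
       (\<exists>e'>0. e' < 1 \<and> 0 < B2 A l e' k n j s j s * z2 A l e' v k j s j + (\<Sum>i = 1..n - 1. B2 A l e' k n j s (k + i) s * z2 A l e' v k j s (k + i)))"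
        using C.part2[OF j s e] C.Q2[OF j s e0] ex by blast
    qed
  next
    show "\<forall>s\<in>{2..k}.
       simple_eigenvalue (mat_of_1 (k + (n - 1)) (B3 A l e k n s)) l \<and>
       mat_of_1 (k + (n - 1)) (B3 A l e k n s) *\<^sub>v vec_of_1 (k + (n - 1)) (wvec u k) =
       l \<cdot>\<^sub>v vec_of_1 (k + (n - 1)) (wvec u k) \<and>
       mat_of_rows (k + (n - 1)) [vec_of_1 (k + (n - 1)) (z3 A l e v k s)] * mat_of_1 (k + (n - 1)) (B3 A l e k n s) =
       l \<cdot>\<^sub>m mat_of_rows (k + (n - 1)) [vec_of_1 (k + (n - 1)) (z3 A l e v k s)] \<and>
       algebraically_positive (mat_of_1 (k + (n - 1)) (B3 A l e k n s)) \<and>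
       B3 A l e k n s k s * z3 A l e v k s k + (\<Sum>i = 1..n - 1. B3 A l e k n s (k + i) s * z3 A l e v k s (k + i)) =
       (l - e * A $$ (0, 0)) * v $ 0 \<and>
       (\<exists>e'>0. e' < 1 \<and> 0 < B3 A l e' k n s k s * z3 A l e' v k s k + (\<Sum>i = 1..n - 1. B3 A l e' k n s (k + i) s * z3 A l e' v k s (k + i)))"
    proof (intro ballI)
      fix s assume s: "s \<in> {2..k}"
      have ex: "\<exists>e'>0. e' < 1 \<and> 0 < B3 A l e' k n s k s * z3 A l e' v k s k + (\<Sum>i = 1..n - 1. B3 A l e' k n s (k + i) s * z3 A l e' v k s (k + i))"
      proof (intro exI[of _ e''] conjI e''0 e''1)
        show "0 < B3 A l e'' k n s k s * z3 A l e'' v k s k + (\<Sum>i = 1..n - 1. B3 A l e'' k n s (k + i) s * z3 A l e'' v k s (k + i))"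
          unfolding C.Q3[OF s] using e''b v0 by (auto intro: mult_pos_pos)
      qed
      show "simple_eigenvalue (mat_of_1 (k + (n - 1)) (B3 A l e k n s)) l \<and>
       mat_of_1 (k + (n - 1)) (B3 A l e k n s) *\<^sub>v vec_of_1 (k + (n - 1)) (wvec u k) =
       l \<cdot>\<^sub>v vec_of_1 (k + (n - 1)) (wvec u k) \<and>
       mat_of_rows (k + (n - 1)) [vec_of_1 (k + (n - 1)) (z3 A l e v k s)] * mat_of_1 (k + (n - 1)) (B3 A l e k n s) =
       l \<cdot>\<^sub>m mat_of_rows (k + (n - 1)) [vec_of_1 (k + (n - 1)) (z3 A l e v k s)] \<and>
       algebraically_positive (mat_of_1 (k + (n - 1)) (B3 A l e k n s)) \<and>
       B3 A l e k n s k s * z3 A l e v k s k + (\<Sum>i = 1..n - 1. B3 A l e k n s (k + i) s * z3 A l e v k s (k + i)) =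
       (l - e * A $$ (0, 0)) * v $ 0 \<and>
       (\<exists>e'>0. e' < 1 \<and> 0 < B3 A l e' k n s k s * z3 A l e' v k s k + (\<Sum>i = 1..n - 1. B3 A l e' k n s (k + i) s * z3 A l e' v k s (k + i)))"
        using C.part3[OF s e] C.Q3[OF s] ex by blast
    qed
  qed
qed


end
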